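(* Let $\mathcal T$ be a mesh as in the context, $i\in\{1,\dots,d\}$, $n\in\{0,\dots,N_i\}$, and $x\in\mathrm{ATJ}_i(n)$. Then there are an anchor $A\in\mathcal A$ with $x\in\mathrm{supp}_\Omega B_A$ and a T-junction $T$ with $\mathrm{odir}(T)=i$ and associated cell $Q=\mathrm{ascell}(T)$ such that, with $j=\mathrm{pdir}(T)$: (1) $\overline T\cap\mathrm{conv}\bigl(P_{i,n}(A)\cup\{x\}\bigr)\ne\emptyset$; (2) $Q_j\cap\mathrm{conv}\bigl(A_j\cup\{x_j\}\bigr)\ne\emptyset$; (3) there exists $y\in A_j$ with $y\ne x_j$.
   Context: Fix $d\ge2$, integers $N_1,\dots,N_d\ge1$, $\mathbf p=(p_1,\dots,p_d)\in\mathbb N^d$, $q_k=\lfloor(p_k+1)/2\rfloor$, $\Omega=\prod_{k=1}^d(0,N_k)$, $\mathrm{AR}=\prod_k[q_k,N_k-q_k]$. A mesh $\mathcal T$ is a finite family of pairwise disjoint sets $E=E_1\times\cdots\times E_d$ (entities) with union $\overline\Omega$, each $E_k$ a singleton $\{n\}$, $n\in\{0,\dots,N_k\}$, or an open interval $(a,b)$ with integers $0\le a<b\le N_k$; cells are entities all of whose components are open intervals; the dimension of an entity is its number of interval components. Only meshes arising as follows are considered: start from a tensor-product mesh given by integer grids $0=g^k_0<\dots<g^k_{M_k}=N_k$ (entities: products of grid points and open grid intervals), each containing $0,\dots,q_k$ and $N_k-q_k,\dots,N_k$, and apply finitely many subdivision steps $\mathrm{subdiv}(\mathcal T,Q,j)$: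 for a cell $Q\subset\mathrm{AR}$ and direction $j$ with $m=\frac12(\inf Q_j+\sup Q_j)$ an integer, let $D=\overline Q$; for each $\ell\ne j$, if $\min D_\ell=q_\ell$ replace $D_\ell$ by $D_\ell\cup[0,q_\ell]$, and if $\max D_\ell=N_\ell-q_\ell$ replace $D_\ell$ by $D_\ell\cup[N_\ell-q_\ell,N_\ell]$; replace each entity $E\subset D$ with $E_j=Q_j$ by the three entities with $j$-th component $(\inf Q_j,m)$, $\{m\}$, $(m,\sup Q_j)$. $P_{j,n}(E)$ is $E$ with its $j$-th component replaced by $\{n\}$; $S_j(n)=\{z\in\overline\Omega:z_j=n\}$; $\mathrm{Sk}_j=\bigcup_{Q\text{ cell}}\{z\in\overline Q:z_j\in\{\inf Q_j,\sup Q_j\}\}$; $\mathrm{conv}$ is convex hull. T-junctions: an entity $T$ of dimension $d-2$, $T\not\subset\partial\Omega$, such that fewer than four entities $F$ of dimension $d-1$ satisfy $T\subset\partial F$; with singleton components $T_i=\{t_i\}$, $T_j=\{t_j\}$, the unique cell $Q=\mathrm{ascell}(T)$ with $T\subset\partial Q$, $t_i\in Q_i$, $t_j\in\{\inf Q_j,\sup Q_j\}$ defines $\mathrm{odir}(T)=i$, $\mathrm{pdir}(T)=j$. Anchors: $\kappa=\{\ell:p_\ell\text{ odd}\}$; $\mathcal A$ is the set of all $A=A_1\times\dots\times A_d\subset\mathrm{AR}$ such that for some cell $Q$, $A_\ell=\{n_\ell\}$ with $n_\ell\in\{\inf Q_\ell,\sup Q_\ell\}$ for $\ell\in\kappa$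 and $A_\ell=Q_\ell$ for $\ell\notin\kappa$. Global knot vector $\Xi^j_E$: increasing sequence of all integers $n$ with $P_{j,n}(E)\subseteq\mathrm{Sk}_j$. Local knot vector $v^j_A=(\ell_0,\dots,\ell_{p_j+1})$: consecutive entries of $\Xi^j_A$ with $\ell_{\lfloor(p_j+1)/2\rfloor}=\inf A_j$. $\mathrm{supp}_\Omega B_A=\prod_k[\ell^{(k)}_0,\ell^{(k)}_{p_k+1}]$ where $v^k_A=(\ell^{(k)}_0,\dots,\ell^{(k)}_{p_k+1})$. Abstract T-junction extension: $\mathrm{ATJ}_j(n)=S_j(n)\cap\bigcup_{A\in\mathcal A,\,n\in\Xi^j_A}\mathrm{supp}_\Omega B_A\cap\bigcup_{A\in\mathcal A,\,n\notin\Xi^j_A}\mathrm{supp}_\Omega B_A$. *)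

theory Defs
  imports "HOL-Analysis.Analysis"
begin

text \<open>Coordinate directions are the elements of a finite type 'd, so d = CARD('d);
points of the closed domain live in real^'d.  An entity is described by its
components: each component is a singleton {n} (Pt n) or an open interval (a,b) (Iv a b).\<close>

datatype comp = Pt int | Iv int int

fun cset :: "comp \<Rightarrow> real set" where
  "cset (Pt n) = {real_of_int n}"
| "cset (Iv a b) = {real_of_int a <..< real_of_int b}"

fun clo :: "comp \<Rightarrow> int" where
  "clo (Pt n) = n"
| "clo (Iv a b) = a"

fun chi :: "comp \<Rightarrow> int" where
  "chi (Pt n) = n"
| "chi (Iv a b) = b"

fun is_iv :: "comp \<Rightarrow> bool" where
  "is_iv (Pt n) = False"
| "is_iv (Iv a b) = True"

type_synonym 'd ent = "'d \<Rightarrow> comp"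

definition eset :: "'d::finite ent \<Rightarrow> (real^'d) set" where
  "eset E = {z. \<forall>k. z$k \<in> cset (E k)}"

definition is_cell :: "'d::finite ent \<Rightarrow> bool" where
  "is_cell E \<longleftrightarrow> (\<forall>k. is_iv (E k))"

definition edim :: "'d::finite ent \<Rightarrow> nat" where
  "edim E = card {k. is_iv (E k)}"

definition qq :: "('d \<Rightarrow> nat) \<Rightarrow> 'd \<Rightarrow> nat" where
  "qq p k = (p k + 1) div 2"

definition Omega :: "('d::finite \<Rightarrow> nat) \<Rightarrow> (real^'d) set" where
  "Omega N = {z. \<forall>k. 0 < z$k \<and> z$k < real (N k)}"

definition cOmega :: "('d::finite \<Rightarrow> nat) \<Rightarrow> (real^'d) set" where
  "cOmega N = {z. \<forall>k. 0 \<le> z$k \<and> z$k \<le> real (N k)}"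

definition AR :: "('d::finite \<Rightarrow> nat) \<Rightarrow> ('d \<Rightarrow> nat) \<Rightarrow> (real^'d) set" where
  "AR N p = {z. \<forall>k. real (qq p k) \<le> z$k \<and> z$k \<le> real (N k) - real (qq p k)}"

definition grids_ok :: "('d::finite \<Rightarrow> nat) \<Rightarrow> ('d \<Rightarrow> nat) \<Rightarrow> ('d \<Rightarrow> int set) \<Rightarrow> bool" where
  "grids_ok N p G \<longleftrightarrow> (\<forall>k. G k \<subseteq> {0..int (N k)} \<and> 0 \<in> G k \<and> int (N k) \<in> G k
      \<and> {0..int (qq p k)} \<subseteq> G k \<and> {int (N k) - int (qq p k)..int (N k)} \<subseteq> G k)"

definition tensor_mesh :: "('d::finite \<Rightarrow> int set) \<Rightarrow> 'd ent set" where
  "tensor_mesh G = {E. \<forall>k. (case E k of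
       Pt g \<Rightarrow> g \<in> G k
     | Iv a b \<Rightarrow> a \<in> G k \<and> b \<in> G k \<and> a < b \<and> (\<forall>g\<in>G k. \<not> (a < g \<and> g < b)))}"

text \<open>The set D of the subdivision step (closure of Q, extended to the boundary layers)\<close>
definition subdiv_region :: "('d::finite \<Rightarrow> nat) \<Rightarrow> ('d \<Rightarrow> nat) \<Rightarrow> 'd ent \<Rightarrow> 'd \<Rightarrow> (real^'d) set" where
  "subdiv_region N p Q j = {z. \<forall>l.
     (if l = j then real_of_int (clo (Q j)) \<le> z$l \<and> z$l \<le> real_of_int (chi (Q j))
      else (if clo (Q l) = int (qq p l) then 0 else real_of_int (clo (Q l))) \<le> z$l
         \<and> z$l \<le> (if chi (Q l) = int (N l) - int (qq p l) then real (N l) else real_of_int (chi (Q l))))}"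

definition subdiv :: "('d::finite \<Rightarrow> nat) \<Rightarrow> ('d \<Rightarrow> nat) \<Rightarrow> 'd ent set \<Rightarrow> 'd ent \<Rightarrow> 'd \<Rightarrow> 'd ent set" where
  "subdiv N p T Q j =
    (let D = subdiv_region N p Q j;
         a = clo (Q j); b = chi (Q j); m = (a + b) div 2;
         aff = {E \<in> T. eset E \<subseteq> D \<and> E j = Q j}
     in (T - aff) \<union> (\<Union>E\<in>aff. {E(j := Iv a m), E(j := Pt m), E(j := Iv m b)}))"

inductive mesh_gen :: "('d::finite \<Rightarrow> nat) \<Rightarrow> ('d \<Rightarrow> nat) \<Rightarrow> 'd ent set \<Rightarrow> bool"
  for N p where
  init: "grids_ok N p G \<Longrightarrow> mesh_gen N p (tensor_mesh G)"
| step: "mesh_gen N p T \<Longrightarrow> Q \<in> T \<Longrightarrow> is_cell Q \<Longrightarrow> eset Q \<subseteq> AR N p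
         \<Longrightarrow> even (clo (Q j) + chi (Q j)) \<Longrightarrow> mesh_gen N p (subdiv N p T Q j)"

definition tjunction :: "('d::finite \<Rightarrow> nat) \<Rightarrow> 'd ent set \<Rightarrow> 'd ent \<Rightarrow> bool" where
  "tjunction N M T \<longleftrightarrow> T \<in> M \<and> edim T = CARD('d) - 2
     \<and> \<not> eset T \<subseteq> frontier (Omega N)
     \<and> card {F \<in> M. edim F = CARD('d) - 1 \<and> eset T \<subseteq> frontier (eset F)} < 4"

text \<open>ascell_rel M T Q i j: Q = ascell(T), odir(T) = i, pdir(T) = j\<close>
definition ascell_rel :: "'d::finite ent set \<Rightarrow> 'd ent \<Rightarrow> 'd ent \<Rightarrow> 'd \<Rightarrow> 'd \<Rightarrow> bool" where
  "ascell_rel M T Q i j \<longleftrightarrow> i \<noteq> j \<and> Q \<in> M \<and> is_cell Q \<and> eset T \<subseteq> frontier (eset Q)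
     \<and> (\<exists>ti tj. T i = Pt ti \<and> T j = Pt tj \<and> real_of_int ti \<in> cset (Q i)
                \<and> tj \<in> {clo (Q j), chi (Q j)})"

definition anchors :: "('d::finite \<Rightarrow> nat) \<Rightarrow> ('d \<Rightarrow> nat) \<Rightarrow> 'd ent set \<Rightarrow> 'd ent set" where
  "anchors N p M = {A. eset A \<subseteq> AR N p \<and> (\<exists>Q\<in>M. is_cell Q \<and>
      (\<forall>l. if odd (p l) then (\<exists>n\<in>{clo (Q l), chi (Q l)}. A l = Pt n) else A l = Q l))}"

definition Sk :: "'d::finite ent set \<Rightarrow> 'd \<Rightarrow> (real^'d) set" where
  "Sk M j = (\<Union>Q\<in>{Q \<in> M. is_cell Q}.
      {z \<in> closure (eset Q). z$j \<in> {real_of_int (clo (Q j)), real_of_int (chi (Q j))}})"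

definition gknots :: "'d::finite ent set \<Rightarrow> 'd \<Rightarrow> 'd ent \<Rightarrow> int set" where
  "gknots M j E = {n. eset (E(j := Pt n)) \<subseteq> Sk M j}"

definition is_lkv :: "('d::finite \<Rightarrow> nat) \<Rightarrow> 'd ent set \<Rightarrow> 'd \<Rightarrow> 'd ent \<Rightarrow> int list \<Rightarrow> bool" where
  "is_lkv p M j A v \<longleftrightarrow> length v = p j + 2 \<and> v ! qq p j = clo (A j)
     \<and> (\<exists>r. v = take (p j + 2) (drop r (sorted_list_of_set (gknots M j A))))"

definition lkv :: "('d::finite \<Rightarrow> nat) \<Rightarrow> 'd ent set \<Rightarrow> 'd \<Rightarrow> 'd ent \<Rightarrow> int list" where
  "lkv p M j A = (THE v. is_lkv p M j A v)"

definition suppB :: "('d::finite \<Rightarrow> nat) \<Rightarrow> 'd ent set \<Rightarrow> 'd ent \<Rightarrow> (real^'d) set" where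
  "suppB p M A = {z. \<forall>k. real_of_int (hd (lkv p M k A)) \<le> z$k
                        \<and> z$k \<le> real_of_int (last (lkv p M k A))}"

definition Sj :: "('d::finite \<Rightarrow> nat) \<Rightarrow> 'd \<Rightarrow> int \<Rightarrow> (real^'d) set" where
  "Sj N j n = {z \<in> cOmega N. z$j = real_of_int n}"

definition ATJ :: "('d::finite \<Rightarrow> nat) \<Rightarrow> ('d \<Rightarrow> nat) \<Rightarrow> 'd ent set \<Rightarrow> 'd \<Rightarrow> int \<Rightarrow> (real^'d) set" where
  "ATJ N p M j n = Sj N j n
     \<inter> (\<Union>A\<in>{A \<in> anchors N p M. n \<in> gknots M j A}. suppB p M A)
     \<inter> (\<Union>A\<in>{A \<in> anchors N p M. n \<notin> gknots M j A}. suppB p M A)"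

end

theory Submission
  imports Defs
begin


inductive dyp :: "int set \<Rightarrow> int \<Rightarrow> int \<Rightarrow> bool" for G where
  dy_base: "a \<in> G \<Longrightarrow> b \<in> G \<Longrightarrow> a < b \<Longrightarrow> (\<forall>g\<in>G. \<not> (a < g \<and> g < b)) \<Longrightarrow> dyp G a b"
| dy_left: "dyp G a b \<Longrightarrow> a + b = 2*m \<Longrightarrow> dyp G a m"
| dy_right: "dyp G a b \<Longrightarrow> a + b = 2*m \<Longrightarrow> dyp G m b"

definition basei :: "int set \<Rightarrow> int \<Rightarrow> int \<Rightarrow> bool" where
  "basei G a b \<longleftrightarrow> a \<in> G \<and> b \<in> G \<and> a < b \<and> (\<forall>g\<in>G. \<not> (a < g \<and> g < b))"

definition inhalf :: "int \<Rightarrow> int \<Rightarrow> int \<Rightarrow> int \<Rightarrow> bool" where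
  "inhalf a b c e \<longleftrightarrow> (\<exists>m. a + b = 2*m \<and> (e \<le> m \<or> m \<le> c))"

definition lamC :: "int \<Rightarrow> int \<Rightarrow> int \<Rightarrow> int \<Rightarrow> bool" where
  "lamC a b c e \<longleftrightarrow> (c < b \<and> a < e \<longrightarrow>
     (a \<le> c \<and> e \<le> b \<and> ((c,e) \<noteq> (a,b) \<longrightarrow> inhalf a b c e)) \<or>
     (c \<le> a \<and> b \<le> e \<and> ((a,b) \<noteq> (c,e) \<longrightarrow> inhalf c e a b)))"

lemma dyp_lt: "dyp G a b \<Longrightarrow> a < b"
  by (induction rule: dyp.induct) presburger+

lemma basei_eq: "basei G a b \<Longrightarrow> basei G c e \<Longrightarrow> c < b \<Longrightarrow> a < e \<Longrightarrow> a = c \<and> b = e"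
  unfolding basei_def by (metis linorder_neqE_linordered_idom order.strict_trans)

lemma dyp_base_of: "dyp G c e \<Longrightarrow> \<exists>g h. basei G g h \<and> g \<le> c \<and> e \<le> h \<and> ((c,e) = (g,h) \<or> inhalf g h c e)"
proof (induction rule: dyp.induct)
  case (dy_base a b)
  then show ?case unfolding basei_def by blast
next
  case (dy_left a b m)
  then obtain g h where gh: "basei G g h" "g \<le> a" "b \<le> h" "(a,b) = (g,h) \<or> inhalf g h a b" by blast
  have "a < b" using dy_left.hyps(1) dyp_lt by blast
  show ?case
  proof (rule exI[of _ g], rule exI[of _ h], intro conjI gh(1) gh(2))
    show "m \<le> h" using gh \<open>a<b\<close> dy_left.hyps(2) by linarith
    show "(a, m) = (g, h) \<or> inhalf g h a m"
      using gh(4) proof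
      assume "(a,b) = (g,h)" then show ?thesis using dy_left.hyps(2) unfolding inhalf_def by auto
    next
      assume "inhalf g h a b" then obtain m' where "g+h = 2*m'" "b \<le> m' \<or> m' \<le> a" unfolding inhalf_def by auto
      then show ?thesis unfolding inhalf_def using \<open>a<b\<close> dy_left.hyps(2) by (intro disjI2 exI[of _ m']) linarith
    qed
  qed
next
  case (dy_right a b m)
  then obtain g h where gh: "basei G g h" "g \<le> a" "b \<le> h" "(a,b) = (g,h) \<or> inhalf g h a b" by blast
  have "a < b" using dy_right.hyps(1) dyp_lt by blast
  show ?case
  proof (rule exI[of _ g], rule exI[of _ h], intro conjI gh(1) gh(3))
    show "g \<le> m" using gh \<open>a<b\<close> dy_right.hyps(2) by linarith
    show "(m, b) = (g, h) \<or> inhalf g h m b"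
      using gh(4) proof
      assume "(a,b) = (g,h)" then show ?thesis using dy_right.hyps(2) unfolding inhalf_def by auto
    next
      assume "inhalf g h a b" then obtain m' where "g+h = 2*m'" "b \<le> m' \<or> m' \<le> a" unfolding inhalf_def by auto
      then show ?thesis unfolding inhalf_def using \<open>a<b\<close> dy_right.hyps(2) by (intro disjI2 exI[of _ m']) linarith
    qed
  qed
qed

lemma basei_sub_dyp: "basei G c e \<Longrightarrow> dyp G a b \<Longrightarrow> a \<le> c \<Longrightarrow> e \<le> b \<Longrightarrow> a = c \<and> b = e"
proof -
  assume c: "basei G c e" "dyp G a b" "a \<le> c" "e \<le> b"
  obtain g h where gh: "basei G g h" "g \<le> a" "b \<le> h" using dyp_base_of[OF c(2)] by blast
  have "c < e" using c(1) unfolding basei_def by auto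
  have "g = c \<and> h = e" using basei_eq[OF gh(1) c(1)] gh c \<open>c<e\<close> by linarith
  then show ?thesis using gh c by auto
qed

lemma inhalf_mono: "inhalf a b c e \<Longrightarrow> c \<le> c' \<Longrightarrow> e' \<le> e \<Longrightarrow> inhalf a b c' e'"
  unfolding inhalf_def by force

definition half :: "int \<Rightarrow> int \<Rightarrow> int \<Rightarrow> int \<Rightarrow> bool" where
  "half a0 b0 a b \<longleftrightarrow> (\<exists>q. a0 + b0 = 2*q \<and> ((a = a0 \<and> b = q) \<or> (a = q \<and> b = b0)))"

lemma dyp_induct2[consumes 1, case_names base step]:
  assumes "dyp G a b"
    and "\<And>a b. basei G a b \<Longrightarrow> P a b"
    and "\<And>a0 b0 a b. dyp G a0 b0 \<Longrightarrow> P a0 b0 \<Longrightarrow> half a0 b0 a b \<Longrightarrow> P a b"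
  shows "P a b"
  using assms(1)
proof (induction rule: dyp.induct)
  case (dy_base a b) then show ?case using assms(2) unfolding basei_def by blast
next
  case (dy_left a b m) then show ?case using assms(3)[of a b a m] unfolding half_def by blast
next
  case (dy_right a b m) then show ?case using assms(3)[of a b m b] unfolding half_def by blast
qed

lemma half_dyp: "dyp G a0 b0 \<Longrightarrow> half a0 b0 a b \<Longrightarrow> dyp G a b"
  unfolding half_def using dy_left dy_right by blast

lemma half_props: "half a0 b0 a b \<Longrightarrow> a0 < b0 \<Longrightarrow> a0 \<le> a \<and> b \<le> b0 \<and> (a,b) \<noteq> (a0,b0) \<and> inhalf a0 b0 a b"
  unfolding half_def inhalf_def by auto

lemma dyp_lam: "dyp G a b \<Longrightarrow> dyp G c e \<Longrightarrow> lamC a b c e"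
proof (induction arbitrary: c e rule: dyp_induct2)
  case (base a b)
  obtain g h where gh: "basei G g h" "g \<le> c" "e \<le> h" "(c,e) = (g,h) \<or> inhalf g h c e"
    using dyp_base_of[OF base.prems] by blast
  have "c < e" using dyp_lt[OF base.prems] .
  show ?case unfolding lamC_def
  proof
    assume ov: "c < b \<and> a < e"
    have "a = g \<and> b = h" using basei_eq[of G a b g h] base.hyps gh ov \<open>c<e\<close> by linarith
    then show "(a \<le> c \<and> e \<le> b \<and> ((c,e) \<noteq> (a,b) \<longrightarrow> inhalf a b c e)) \<or>
     (c \<le> a \<and> b \<le> e \<and> ((a,b) \<noteq> (c,e) \<longrightarrow> inhalf c e a b))" using gh by auto
  qed
next
  case (step a0 b0 a b)
  have hh: "half a0 b0 a b" by fact
  have IH: "\<And>c e. dyp G c e \<Longrightarrow> lamC a0 b0 c e" by fact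
  have pr: "dyp G c e" by fact
  have I0: "dyp G a0 b0" by fact
  have "a0 < b0" using dyp_lt[OF I0] .
  have Idy: "dyp G a b" using half_dyp[OF I0 hh] .
  have "a < b" using dyp_lt[OF Idy] .
  obtain q0 where q0: "a0 + b0 = 2*q0" "(a = a0 \<and> b = q0) \<or> (a = q0 \<and> b = b0)"
    using hh unfolding half_def by auto
  have hp: "a0 \<le> a \<and> b \<le> b0 \<and> (a,b) \<noteq> (a0,b0) \<and> inhalf a0 b0 a b"
    using half_props[OF hh \<open>a0<b0\<close>] .
  show ?case using pr
  proof (induction rule: dyp_induct2)
    case (base c e)
    have Jdy: "dyp G c e" using base.hyps unfolding basei_def by (blast intro: dy_base)
    have C0: "lamC a0 b0 c e" using IH Jdy by blast
    have "c < e" using dyp_lt[OF Jdy] .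
    show ?case unfolding lamC_def
    proof
      assume ov: "c < b \<and> a < e"
      have ov0: "c < b0 \<and> a0 < e" using ov hp by linarith
      from C0[unfolded lamC_def, rule_format, OF ov0]
      show "(a \<le> c \<and> e \<le> b \<and> ((c,e) \<noteq> (a,b) \<longrightarrow> inhalf a b c e)) \<or>
        (c \<le> a \<and> b \<le> e \<and> ((a,b) \<noteq> (c,e) \<longrightarrow> inhalf c e a b))"
      proof
        assume A: "a0 \<le> c \<and> e \<le> b0 \<and> ((c,e) \<noteq> (a0,b0) \<longrightarrow> inhalf a0 b0 c e)"
        have "a0 = c \<and> b0 = e" using basei_sub_dyp[OF base.hyps I0] A by blast
        then show ?thesis using hp by auto
      next
        assume B: "c \<le> a0 \<and> b0 \<le> e \<and> ((a0,b0) \<noteq> (c,e) \<longrightarrow> inhalf c e a0 b0)"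
        show ?thesis
        proof (cases "(a0,b0) = (c,e)")
          case True then show ?thesis using hp by auto
        next
          case False
          then have "inhalf c e a0 b0" using B by auto
          then have "inhalf c e a b" by (rule inhalf_mono) (use hp in linarith)+
          then show ?thesis using B hp by auto
        qed
      qed
    qed
  next
    case (step c0 e0 c e)
    have hj: "half c0 e0 c e" by fact
    have J0: "dyp G c0 e0" by fact
    have Jdy: "dyp G c e" using half_dyp[OF J0 hj] .
    have C0: "lamC a0 b0 c e" using IH Jdy by blast
    have CI: "lamC a b c0 e0" by fact
    have "c0 < e0" using dyp_lt[OF J0] .
    have "c < e" using dyp_lt[OF Jdy] .
    obtain q where q: "c0 + e0 = 2*q" "(c = c0 \<and> e = q) \<or> (c = q \<and> e = e0)"
      using hj unfolding half_def by auto
    have jp: "c0 \<le> c \<and> e \<le> e0 \<and> (c,e) \<noteq> (c0,e0) \<and> inhalf c0 e0 c e"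
      using half_props[OF hj \<open>c0<e0\<close>] .
    show ?case unfolding lamC_def
    proof
      assume ov: "c < b \<and> a < e"
      have ov0: "c < b0 \<and> a0 < e" using ov hp by linarith
      have ovI: "c0 < b \<and> a < e0" using ov jp by linarith
      from C0[unfolded lamC_def, rule_format, OF ov0]
      show "(a \<le> c \<and> e \<le> b \<and> ((c,e) \<noteq> (a,b) \<longrightarrow> inhalf a b c e)) \<or>
        (c \<le> a \<and> b \<le> e \<and> ((a,b) \<noteq> (c,e) \<longrightarrow> inhalf c e a b))"
      proof
        assume B: "c \<le> a0 \<and> b0 \<le> e \<and> ((a0,b0) \<noteq> (c,e) \<longrightarrow> inhalf c e a0 b0)"
        show ?thesis
        proof (cases "(a0,b0) = (c,e)")
          case True then show ?thesis using hp by auto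
        next
          case False
          then have "inhalf c e a0 b0" using B by auto
          then have "inhalf c e a b" by (rule inhalf_mono) (use hp in linarith)+
          then show ?thesis using B hp by auto
        qed
      next
        assume A: "a0 \<le> c \<and> e \<le> b0 \<and> ((c,e) \<noteq> (a0,b0) \<longrightarrow> inhalf a0 b0 c e)"
        show ?thesis
        proof (cases "(c,e) = (a0,b0)")
          case True then show ?thesis using hp by auto
        next
          case False
          then obtain mm where mm: "a0 + b0 = 2*mm" "e \<le> mm \<or> mm \<le> c" using A unfolding inhalf_def by auto
          have "mm = q0" using mm(1) q0(1) by linarith
          have sub: "a \<le> c \<and> e \<le> b" using mm \<open>mm = q0\<close> q0 ov A by auto
          show ?thesis
          proof (cases "(c,e) = (a,b)")
            case True then show ?thesis by auto
          next
            case F2: False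
            from CI[unfolded lamC_def, rule_format, OF ovI] show ?thesis
            proof
              assume A2: "a \<le> c0 \<and> e0 \<le> b \<and> ((c0,e0) \<noteq> (a,b) \<longrightarrow> inhalf a b c0 e0)"
              show ?thesis
              proof (cases "(c0,e0) = (a,b)")
                case True then show ?thesis using jp sub by auto
              next
                case False then have "inhalf a b c0 e0" using A2 by auto
                then have "inhalf a b c e" by (rule inhalf_mono) (use jp in linarith)+
                then show ?thesis using sub by auto
              qed
            next
              assume B2: "c0 \<le> a \<and> b \<le> e0 \<and> ((a,b) \<noteq> (c0,e0) \<longrightarrow> inhalf c0 e0 a b)"
              show ?thesis
              proof (cases "(a,b) = (c0,e0)")
                case True then show ?thesis using jp sub by auto
              next
                case False
                then obtain qq where qq: "c0 + e0 = 2*qq" "b \<le> qq \<or> qq \<le> a" using B2 unfolding inhalf_def by auto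
                have "qq = q" using qq(1) q(1) by linarith
                then have False using qq(2) q(2) sub F2 ov B2 \<open>a<b\<close> \<open>c<e\<close> by auto
                then show ?thesis ..
              qed
            qed
          qed
        qed
      qed
    qed
  qed
qed



definition wfc :: "nat \<Rightarrow> comp \<Rightarrow> bool" where
  "wfc Nk c \<longleftrightarrow> 0 \<le> clo c \<and> chi c \<le> int Nk \<and> (is_iv c \<longrightarrow> clo c < chi c)"

definition meets :: "comp \<Rightarrow> comp \<Rightarrow> bool" where
  "meets c c' = (case c of Pt m \<Rightarrow> clo c' \<le> m \<and> m \<le> chi c' | Iv a b \<Rightarrow> a < chi c' \<and> clo c' < b)"

definition subc :: "comp \<Rightarrow> comp \<Rightarrow> bool" where
  "subc c c' \<longleftrightarrow> clo c' \<le> clo c \<and> chi c \<le> chi c'"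

definition lov :: "'d::finite ent \<Rightarrow> real^'d" where
  "lov E = (\<chi> k. real_of_int (clo (E k)))"
definition hiv :: "'d::finite ent \<Rightarrow> real^'d" where
  "hiv E = (\<chi> k. real_of_int (chi (E k)))"
definition ebox :: "'d::finite ent \<Rightarrow> (real^'d) set" where
  "ebox E = cbox (lov E) (hiv E)"

lemma mem_ebox: "z \<in> ebox E \<longleftrightarrow> (\<forall>k. real_of_int (clo (E k)) \<le> z$k \<and> z$k \<le> real_of_int (chi (E k)))"
  unfolding ebox_def lov_def hiv_def by (simp add: mem_box_cart)

lemma mem_eset: "z \<in> eset E \<longleftrightarrow> (\<forall>k. z$k \<in> cset (E k))"
  unfolding eset_def by simp

lemma not_iv: "\<not> is_iv c \<longleftrightarrow> c = Pt (clo c)"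
  by (cases c) auto

lemma is_iv_ex: "is_iv c \<longleftrightarrow> c = Iv (clo c) (chi c)"
  by (cases c) auto

lemma cset_bounds: "x \<in> cset c \<Longrightarrow> real_of_int (clo c) \<le> x \<and> x \<le> real_of_int (chi c)"
  by (cases c) auto

lemma cset_iv_strict: "is_iv c \<Longrightarrow> x \<in> cset c \<Longrightarrow> real_of_int (clo c) < x \<and> x < real_of_int (chi c)"
  by (cases c) auto

lemma cset_pt: "\<not> is_iv c \<Longrightarrow> x \<in> cset c \<Longrightarrow> x = real_of_int (clo c)"
  by (cases c) auto

lemma cset_iff: "x \<in> cset c \<longleftrightarrow> (if is_iv c then real_of_int (clo c) < x \<and> x < real_of_int (chi c) else x = real_of_int (clo c))"
  by (cases c) auto

lemma meets_of: "x \<in> cset c \<Longrightarrow> real_of_int (clo c') \<le> x \<Longrightarrow> x \<le> real_of_int (chi c') \<Longrightarrow> meets c c'"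
  unfolding meets_def by (cases c) auto

lemma eset_sub_ebox: "eset E \<subseteq> ebox E"
proof
  fix z assume "z \<in> eset E" then show "z \<in> ebox E" unfolding mem_ebox mem_eset using cset_bounds by blast
qed

definition ctr :: "comp \<Rightarrow> real" where
  "ctr c = (real_of_int (clo c) + real_of_int (chi c)) / 2"

lemma ctr_in: "wfc Nk c \<Longrightarrow> ctr c \<in> cset c"
  unfolding wfc_def ctr_def by (cases c) auto

definition ectr :: "'d::finite ent \<Rightarrow> real^'d" where
  "ectr E = (\<chi> k. ctr (E k))"

lemma ectr_in: "(\<forall>k. wfc (Nf k) (E k)) \<Longrightarrow> ectr E \<in> eset E"
  unfolding ectr_def mem_eset using ctr_in by auto

lemma eset_ne_iff: "eset E \<inter> eset E' \<noteq> {} \<longleftrightarrow> (\<forall>k. cset (E k) \<inter> cset (E' k) \<noteq> {})"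
proof
  assume "eset E \<inter> eset E' \<noteq> {}"
  then obtain x where "x \<in> eset E" "x \<in> eset E'" by blast
  then show "\<forall>k. cset (E k) \<inter> cset (E' k) \<noteq> {}" unfolding mem_eset by blast
next
  assume a: "\<forall>k. cset (E k) \<inter> cset (E' k) \<noteq> {}"
  have h: "\<And>k. \<exists>y. y \<in> cset (E k) \<and> y \<in> cset (E' k)" using a by blast
  define z where "z = (\<chi> k. SOME y. y \<in> cset (E k) \<and> y \<in> cset (E' k))"
  have "\<And>k. z$k \<in> cset (E k) \<and> z$k \<in> cset (E' k)" unfolding z_def using someI_ex[OF h] by simp
  then have "z \<in> eset E \<inter> eset E'" by (simp add: mem_eset)
  then show "eset E \<inter> eset E' \<noteq> {}" by blast
qed

lemma closure_eset:
  assumes wf: "\<forall>k. wfc (Nf k) (E k)"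
  shows "closure (eset E) = ebox E"
proof
  show "closure (eset E) \<subseteq> ebox E"
    unfolding ebox_def by (rule closure_minimal[OF eset_sub_ebox[unfolded ebox_def] closed_cbox])
next
  show "ebox E \<subseteq> closure (eset E)"
  proof
    fix z assume z: "z \<in> ebox E"
    define c where "c = ectr E"
    have c: "c \<in> eset E" unfolding c_def using ectr_in[OF wf] .
    have seg: "z + t *\<^sub>R (c - z) \<in> eset E" if t: "0 < t" "t \<le> 1" for t
      unfolding mem_eset
    proof
      fix k
      have zk: "real_of_int (clo (E k)) \<le> z$k \<and> z$k \<le> real_of_int (chi (E k))" using z unfolding mem_ebox by auto
      have ck: "c$k \<in> cset (E k)" using c unfolding mem_eset by auto
      show "(z + t *\<^sub>R (c - z)) $ k \<in> cset (E k)"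
      proof (cases "is_iv (E k)")
        case True
        then have "real_of_int (clo (E k)) < c$k \<and> c$k < real_of_int (chi (E k))" using cset_iv_strict ck by blast
        moreover have "z$k + t * (c$k - z$k) = (1 - t) * z$k + t * c$k" by (simp add: algebra_simps)
        moreover have "(1 - t) * z$k \<ge> (1-t) * real_of_int (clo (E k))" using zk t by (intro mult_left_mono) auto
        moreover have "(1 - t) * z$k \<le> (1-t) * real_of_int (chi (E k))" using zk t by (intro mult_left_mono) auto
        moreover have "t * c$k > t * real_of_int (clo (E k))" "t * c$k < t * real_of_int (chi (E k))" using calculation(1) t by auto
        ultimately have "real_of_int (clo (E k)) < z$k + t * (c$k - z$k) \<and> z$k + t * (c$k - z$k) < real_of_int (chi (E k))"
          by (auto simp: algebra_simps)
        then show ?thesis using True by (simp add: cset_iff)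
      next
        case False
        then have "c$k = real_of_int (clo (E k))" using cset_pt ck by blast
        moreover have "chi (E k) = clo (E k)" using False by (cases "E k") auto
        ultimately have "z$k = c$k" using zk by auto
        then show ?thesis using ck by simp
      qed
    qed
    show "z \<in> closure (eset E)"
      unfolding closure_approachable
    proof (intro allI impI)
      fix e :: real assume e: "e > 0"
      define t where "t = min 1 (e / (2 * (norm (c - z) + 1)))"
      have "0 < 2 * (norm (c - z) + 1)" by (smt (verit) norm_ge_zero)
      then have "0 < e / (2 * (norm (c - z) + 1))" using e by (intro divide_pos_pos)
      then have t: "0 < t" "t \<le> 1" unfolding t_def by auto
      have "dist (z + t *\<^sub>R (c - z)) z = t * norm (c - z)" using t by (simp add: dist_norm)
      also have "\<dots> \<le> e / (2 * (norm (c - z) + 1)) * norm (c - z)"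
        unfolding t_def by (intro mult_right_mono) auto
      also have "\<dots> < e"
      proof -
        have p: "0 < norm (c - z) + 1" by (smt (verit) norm_ge_zero)
        then have q: "norm (c - z) / (norm (c - z) + 1) \<le> 1" by (simp add: divide_le_eq)
        have "e / (2 * (norm (c - z) + 1)) * norm (c - z) = (e/2) * (norm (c - z) / (norm (c - z) + 1))"
          by simp
        also have "\<dots> \<le> (e/2) * 1" using q e by (intro mult_left_mono) auto
        finally show ?thesis using e by linarith
      qed
      finally show "\<exists>y\<in>eset E. dist y z < e" using seg[OF t] by blast
    qed
  qed
qed


lemma convex_cset: "convex (cset c)"
  by (cases c) (simp_all add: convex_real_interval)

lemma convex_eset: "convex (eset (E::'d::finite ent))"
proof -
  have "eset E = (\<Inter>k. (\<lambda>z. z$k) -` cset (E k))" unfolding eset_def by auto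
  moreover have "convex ((\<lambda>z::real^'d. z$k) -` cset (E k))" for k
    by (rule convex_linear_vimage[OF bounded_linear.linear[OF bounded_linear_vec_nth] convex_cset])
  ultimately show ?thesis by (auto intro: convex_INT)
qed

lemma open_eset_cell: "is_cell Q \<Longrightarrow> eset Q = box (lov Q) (hiv Q)"
proof -
  assume "is_cell Q"
  then have c: "\<And>k. is_iv (Q k)" unfolding is_cell_def by auto
  show ?thesis
    unfolding set_eq_iff mem_eset mem_box_cart lov_def hiv_def vec_lambda_beta cset_iff using c by simp
qed

lemma dyp_range: "dyp G a b \<Longrightarrow> G \<subseteq> {lo..hi} \<Longrightarrow> lo \<le> a \<and> b \<le> hi"
proof (induction rule: dyp.induct)
  case (dy_base a b) then show ?case by auto
next
  case (dy_left a b m) then show ?case using dyp_lt[OF dy_left.hyps(1)] by linarith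
next
  case (dy_right a b m) then show ?case using dyp_lt[OF dy_right.hyps(1)] by linarith
qed

definition compok :: "int set \<Rightarrow> nat \<Rightarrow> comp \<Rightarrow> bool" where
  "compok Gk Nk c = (case c of Iv a b \<Rightarrow> dyp Gk a b | Pt m \<Rightarrow> 0 \<le> m \<and> m \<le> int Nk)"

definition INV :: "('d::finite \<Rightarrow> nat) \<Rightarrow> ('d \<Rightarrow> nat) \<Rightarrow> 'd ent set \<Rightarrow> bool" where
  "INV N p M \<longleftrightarrow> finite M
    \<and> (\<exists>G. grids_ok N p G \<and> (\<forall>E\<in>M. \<forall>k. compok (G k) (N k) (E k)))
    \<and> (\<forall>E\<in>M. \<forall>E'\<in>M. (\<forall>k. cset (E k) \<inter> cset (E' k) \<noteq> {}) \<longrightarrow> E = E')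
    \<and> (\<forall>z\<in>cOmega N. \<exists>E\<in>M. z \<in> eset E)
    \<and> (\<forall>E\<in>M. \<forall>E'\<in>M. (\<forall>k. meets (E k) (E' k)) \<longrightarrow> (\<forall>k. subc (E k) (E' k)))"

lemma compok_wfc:
  assumes "compok Gk Nk c" "Gk \<subseteq> {0..int Nk}" shows "wfc Nk c"
proof (cases c)
  case (Pt m) then show ?thesis using assms unfolding compok_def wfc_def by auto
next
  case (Iv a b)
  then have d: "dyp Gk a b" using assms unfolding compok_def by auto
  have "0 \<le> a \<and> b \<le> int Nk" using dyp_range[OF d assms(2)] .
  moreover have "a < b" using dyp_lt[OF d] .
  ultimately show ?thesis using Iv unfolding wfc_def by auto
qed

lemma INV_wf: "INV N p M \<Longrightarrow> E \<in> M \<Longrightarrow> wfc (N k) (E k)"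
proof -
  assume "INV N p M" "E \<in> M"
  then have "\<exists>G. grids_ok N p G \<and> (\<forall>E\<in>M. \<forall>k. compok (G k) (N k) (E k))" unfolding INV_def by simp
  then obtain G where G: "grids_ok N p G" "\<forall>E\<in>M. \<forall>k. compok (G k) (N k) (E k)" by blast
  have "compok (G k) (N k) (E k)" using G(2) \<open>E \<in> M\<close> by blast
  moreover have "G k \<subseteq> {0..int (N k)}" using G(1) unfolding grids_ok_def by blast
  ultimately show ?thesis by (rule compok_wfc)
qed



definition tc :: "int set \<Rightarrow> comp \<Rightarrow> bool" where
  "tc Gk c = (case c of Pt g \<Rightarrow> g \<in> Gk | Iv a b \<Rightarrow> a \<in> Gk \<and> b \<in> Gk \<and> a < b \<and> (\<forall>g\<in>Gk. \<not> (a < g \<and> g < b)))"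

lemma tensor_mesh_tc: "tensor_mesh G = {E. \<forall>k. tc (G k) (E k)}"
  unfolding tensor_mesh_def tc_def by simp

lemma tc_eq:
  assumes "tc Gk c" "tc Gk c'" "cset c \<inter> cset c' \<noteq> {}" shows "c = c'"
proof -
  obtain x where x: "x \<in> cset c" "x \<in> cset c'" using assms(3) by blast
  show ?thesis
  proof (cases c)
    case (Pt g)
    show ?thesis
    proof (cases c')
      case (Pt g') then show ?thesis using x \<open>c = Pt g\<close> by auto
    next
      case (Iv a' b')
      then have "real_of_int a' < real_of_int g" "real_of_int g < real_of_int b'" using x \<open>c = Pt g\<close> by auto
      then have "a' < g" "g < b'" by simp_all
      then show ?thesis using assms(1,2) Iv \<open>c = Pt g\<close> unfolding tc_def by auto
    qed
  next
    case (Iv a b)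
    show ?thesis
    proof (cases c')
      case (Pt g')
      then have "real_of_int a < real_of_int g'" "real_of_int g' < real_of_int b" using x \<open>c = Iv a b\<close> by auto
      then have "a < g'" "g' < b" by simp_all
      then show ?thesis using assms(1,2) Pt \<open>c = Iv a b\<close> unfolding tc_def by auto
    next
      case (Iv a' b')
      have "real_of_int a < real_of_int b'" "real_of_int a' < real_of_int b" using x \<open>c = Iv a b\<close> Iv by auto
      then have ov: "a < b'" "a' < b" by simp_all
      have t1: "a \<in> Gk" "b \<in> Gk" "a < b" "\<forall>g\<in>Gk. \<not> (a < g \<and> g < b)" using assms(1) \<open>c = Iv a b\<close> unfolding tc_def by auto
      have t2: "a' \<in> Gk" "b' \<in> Gk" "a' < b'" "\<forall>g\<in>Gk. \<not> (a' < g \<and> g < b')" using assms(2) Iv unfolding tc_def by auto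
      have "a = a'"
      proof (rule ccontr)
        assume "a \<noteq> a'"
        then show False
        proof (cases "a < a'")
          case True then show False using t1(4) t2(1) ov by auto
        next
          case False then show False using t2(4) t1(1) ov \<open>a \<noteq> a'\<close> by auto
        qed
      qed
      moreover have "b = b'"
      proof (rule ccontr)
        assume "b \<noteq> b'"
        then show False
        proof (cases "b < b'")
          case True then show False using t2(4) t1(2) ov \<open>a = a'\<close> t1(3) by auto
        next
          case False then show False using t1(4) t2(2) ov \<open>b \<noteq> b'\<close> \<open>a = a'\<close> t2(3) by auto
        qed
      qed
      ultimately show ?thesis using Iv \<open>c = Iv a b\<close> by simp
    qed
  qed
qed

lemma tc_meets_sub:
  assumes "tc Gk c" "tc Gk c'" "meets c c'" shows "subc c c'"
proof (cases c)
  case (Pt g)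
  then show ?thesis using assms(3) unfolding meets_def subc_def by auto
next
  case (Iv a b)
  show ?thesis
  proof (cases c')
    case (Pt g')
    then have "a < g'" "g' < b" using assms(3) Iv unfolding meets_def by auto
    then show ?thesis using assms(1,2) Pt Iv unfolding tc_def by auto
  next
    case (Iv a' b')
    have "real_of_int a < real_of_int b'" "real_of_int a' < real_of_int b"
      using assms(3) Iv \<open>c = Iv a b\<close> unfolding meets_def by auto
    have "cset c \<inter> cset c' \<noteq> {}"
    proof -
      define x where "x = (max (real_of_int a) (real_of_int a') + min (real_of_int b) (real_of_int b')) / 2"
      have "real_of_int a < real_of_int b" "real_of_int a' < real_of_int b'"
        using assms(1,2) Iv \<open>c = Iv a b\<close> unfolding tc_def by auto
      then have "x \<in> cset c" "x \<in> cset c'" using \<open>real_of_int a < real_of_int b'\<close> \<open>real_of_int a' < real_of_int b\<close>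
        unfolding x_def using Iv \<open>c = Iv a b\<close> by (auto simp: max_def min_def)
      then show ?thesis by blast
    qed
    then have "c = c'" using tc_eq assms(1,2) by blast
    then show ?thesis unfolding subc_def by simp
  qed
qed

lemma tc_cover:
  assumes "Gk \<subseteq> {0..int Nk}" "0 \<in> Gk" "int Nk \<in> Gk" "0 \<le> z" "z \<le> real Nk"
  shows "\<exists>c. tc Gk c \<and> z \<in> cset c"
proof (cases "\<exists>g\<in>Gk. real_of_int g = z")
  case True
  then obtain g where "g \<in> Gk" "real_of_int g = z" by blast
  then show ?thesis by (intro exI[of _ "Pt g"]) (auto simp: tc_def)
next
  case False
  have fin: "finite Gk" using assms(1) finite_subset by blast
  define L where "L = {g\<in>Gk. real_of_int g \<le> z}"
  define U where "U = {g\<in>Gk. z < real_of_int g}"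
  have finL: "finite L" "finite U" using fin unfolding L_def U_def by auto
  have "0 \<in> L" using assms by (auto simp: L_def)
  have "z \<noteq> real Nk" using False assms(3) by (metis of_int_of_nat_eq)
  then have "int Nk \<in> U" using assms by (auto simp: U_def)
  define a where "a = Max L"
  define b where "b = Min U"
  have aL: "a \<in> L" unfolding a_def using finL \<open>0 \<in> L\<close> by (intro Max_in) auto
  have bU: "b \<in> U" unfolding b_def using finL \<open>int Nk \<in> U\<close> by (intro Min_in) auto
  have az: "real_of_int a < z" using aL False unfolding L_def by force
  have bz: "z < real_of_int b" using bU unfolding U_def by auto
  have nb: "\<forall>g\<in>Gk. \<not> (a < g \<and> g < b)"
  proof (intro ballI notI)
    fix g assume g: "g \<in> Gk" "a < g \<and> g < b"
    show False
    proof (cases "real_of_int g \<le> z")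
      case True then have "g \<in> L" using g unfolding L_def by auto
      then have "g \<le> a" unfolding a_def using finL by auto
      then show False using g by auto
    next
      case False then have "g \<in> U" using g unfolding U_def by auto
      then have "b \<le> g" unfolding b_def using finL by auto
      then show False using g by auto
    qed
  qed
  have "a < b" using az bz by linarith
  then show ?thesis using aL bU nb az bz unfolding L_def U_def
    by (intro exI[of _ "Iv a b"]) (auto simp: tc_def)
qed

lemma tensor_INV:
  assumes g: "grids_ok N p G" shows "INV N p (tensor_mesh G)"
proof -
  have Gk: "G k \<subseteq> {0..int (N k)}" "0 \<in> G k" "int (N k) \<in> G k" for k using g unfolding grids_ok_def by auto
  have fin: "finite (tensor_mesh G)"
  proof -
    define C where "C k = Pt ` G k \<union> (\<lambda>(a,b). Iv a b) ` (G k \<times> G k)" for k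
    have "finite (C k)" for k using finite_subset[OF Gk(1)] unfolding C_def by auto
    then have "finite (PiE UNIV C)" by (intro finite_PiE) auto
    moreover have "tensor_mesh G \<subseteq> PiE UNIV C"
    proof
      fix E assume "E \<in> tensor_mesh G"
      then have tk: "tc (G k) (E k)" for k unfolding tensor_mesh_tc by auto
      have "E k \<in> C k" for k
      proof (cases "E k")
        case (Pt g) then show ?thesis using tk[of k] unfolding C_def tc_def by auto
      next
        case (Iv a b)
        then have "(a,b) \<in> G k \<times> G k" using tk[of k] unfolding tc_def by auto
        then have "Iv a b \<in> (\<lambda>(a,b). Iv a b) ` (G k \<times> G k)" by (rule rev_image_eqI) simp
        then show ?thesis using Iv unfolding C_def by auto
      qed
      then show "E \<in> PiE UNIV C" by (simp add: PiE_UNIV_domain)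
    qed
    ultimately show ?thesis by (rule finite_subset[rotated])
  qed
  have ok: "\<forall>E\<in>tensor_mesh G. \<forall>k. compok (G k) (N k) (E k)"
  proof (intro ballI allI)
    fix E k assume "E \<in> tensor_mesh G"
    then have tk: "tc (G k) (E k)" unfolding tensor_mesh_tc by auto
    show "compok (G k) (N k) (E k)"
    proof (cases "E k")
      case (Pt g) then show ?thesis using tk Gk(1)[of k] unfolding compok_def tc_def by auto
    next
      case (Iv a b) then show ?thesis using tk unfolding compok_def tc_def by (auto intro: dy_base)
    qed
  qed
  have disj: "\<forall>E\<in>tensor_mesh G. \<forall>E'\<in>tensor_mesh G. (\<forall>k. cset (E k) \<inter> cset (E' k) \<noteq> {}) \<longrightarrow> E = E'"
  proof (intro ballI impI)
    fix E E' assume "E \<in> tensor_mesh G" "E' \<in> tensor_mesh G" and ne: "\<forall>k. cset (E k) \<inter> cset (E' k) \<noteq> {}"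
    then have "tc (G k) (E k)" "tc (G k) (E' k)" for k unfolding tensor_mesh_tc by auto
    then have "E k = E' k" for k using tc_eq ne by blast
    then show "E = E'" by auto
  qed
  have cov: "\<forall>z\<in>cOmega N. \<exists>E\<in>tensor_mesh G. z \<in> eset E"
  proof
    fix z assume "z \<in> cOmega N"
    then have zk: "0 \<le> z$k" "z$k \<le> real (N k)" for k unfolding cOmega_def by auto
    have "\<forall>k. \<exists>c. tc (G k) c \<and> z$k \<in> cset c" using tc_cover[OF Gk zk] by blast
    then obtain E where "\<forall>k. tc (G k) (E k) \<and> z$k \<in> cset (E k)" by metis
    then show "\<exists>E\<in>tensor_mesh G. z \<in> eset E" unfolding tensor_mesh_tc mem_eset by auto
  qed
  have fp: "\<forall>E\<in>tensor_mesh G. \<forall>E'\<in>tensor_mesh G. (\<forall>k. meets (E k) (E' k)) \<longrightarrow> (\<forall>k. subc (E k) (E' k))"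
  proof (intro ballI impI allI)
    fix E E' k assume "E \<in> tensor_mesh G" "E' \<in> tensor_mesh G" "\<forall>k. meets (E k) (E' k)"
    then show "subc (E k) (E' k)" using tc_meets_sub unfolding tensor_mesh_tc by blast
  qed
  show ?thesis unfolding INV_def using fin ok disj cov fp g by blast
qed



lemma subc_trans: "subc c1 c2 \<Longrightarrow> subc c2 c3 \<Longrightarrow> subc c1 c3"
  unfolding subc_def by auto

lemma meets_mono2: "meets c c1 \<Longrightarrow> clo c2 \<le> clo c1 \<Longrightarrow> chi c1 \<le> chi c2 \<Longrightarrow> meets c c2"
  unfolding meets_def by (cases c) auto

lemma subdiv_region_closed: "closed (subdiv_region N p Q j)"
proof -
  define f where "f l = (if l = j then real_of_int (clo (Q j)) else (if clo (Q l) = int (qq p l) then 0 else real_of_int (clo (Q l))))" for l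
  define g where "g l = (if l = j then real_of_int (chi (Q j)) else (if chi (Q l) = int (N l) - int (qq p l) then real (N l) else real_of_int (chi (Q l))))" for l
  have e: "(if l = j then real_of_int (clo (Q j)) \<le> z $ l \<and> z $ l \<le> real_of_int (chi (Q j))
        else (if clo (Q l) = int (qq p l) then 0 else real_of_int (clo (Q l))) \<le> z $ l \<and>
           z $ l \<le> (if chi (Q l) = int (N l) - int (qq p l) then real (N l) else real_of_int (chi (Q l))))
     \<longleftrightarrow> f l \<le> z$l \<and> z$l \<le> g l" for z l
    unfolding f_def g_def by simp
  have "subdiv_region N p Q j = cbox (\<chi> l. f l) (\<chi> l. g l)"
    unfolding subdiv_region_def set_eq_iff mem_box_cart vec_lambda_beta mem_Collect_eq e by simp
  then show ?thesis by (metis closed_cbox)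
qed

lemma subdiv_INV:
  assumes inv: "INV N p M" and QM: "Q \<in> M" and cell: "is_cell Q" and ev: "even (clo (Q j) + chi (Q j))"
  shows "INV N p (subdiv N p M Q j)"
proof -
  define a where "a = clo (Q j)"
  define b where "b = chi (Q j)"
  define m where "m = (a + b) div 2"
  define D where "D = subdiv_region N p Q j"
  define A where "A E \<longleftrightarrow> E \<in> M \<and> eset E \<subseteq> D \<and> E j = Q j" for E
  define PC where "PC = {Iv a m, Pt m, Iv m b}"
  have mem: "E \<in> subdiv N p M Q j \<longleftrightarrow> (E \<in> M \<and> \<not> A E) \<or> (\<exists>E0. A E0 \<and> (\<exists>c\<in>PC. E = E0(j := c)))" for E
    unfolding subdiv_def Let_def A_def PC_def D_def a_def b_def m_def by auto
  have fin: "finite M" using inv unfolding INV_def by simp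
  have "\<exists>G. grids_ok N p G \<and> (\<forall>E\<in>M. \<forall>k. compok (G k) (N k) (E k))" using inv unfolding INV_def by simp
  then obtain G where G: "grids_ok N p G" "\<forall>E\<in>M. \<forall>k. compok (G k) (N k) (E k)" by blast
  have disjM: "\<forall>E\<in>M. \<forall>E'\<in>M. (\<forall>k. cset (E k) \<inter> cset (E' k) \<noteq> {}) \<longrightarrow> E = E'" using inv unfolding INV_def by simp
  have covM: "\<forall>z\<in>cOmega N. \<exists>E\<in>M. z \<in> eset E" using inv unfolding INV_def by simp
  have fpM: "\<forall>E\<in>M. \<forall>E'\<in>M. (\<forall>k. meets (E k) (E' k)) \<longrightarrow> (\<forall>k. subc (E k) (E' k))" using inv unfolding INV_def by simp
  have wf: "wfc (N k) (E k)" if "E \<in> M" for E k using INV_wf[OF inv that] .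
  have Qj: "Q j = Iv a b" using cell unfolding is_cell_def a_def b_def by (metis is_iv_ex)
  have dyab: "dyp (G j) a b" using G(2) QM Qj unfolding compok_def by (metis comp.simps(6))
  have "a < b" using dyp_lt[OF dyab] .
  have m2: "a + b = 2*m" using ev unfolding m_def a_def b_def by auto
  have am: "a < m" "m < b" using m2 \<open>a < b\<close> by presburger+
  have Gj: "G j \<subseteq> {0..int (N j)}" using G(1) unfolding grids_ok_def by auto
  have ab0: "0 \<le> a" "b \<le> int (N j)" using dyp_range[OF dyab Gj] by auto
  have pc_ok: "compok (G j) (N j) c" if "c \<in> PC" for c
    using that dy_left[OF dyab m2] dy_right[OF dyab m2] am ab0 unfolding PC_def compok_def by auto
  have pc_range: "a \<le> clo c \<and> chi c \<le> b" if "c \<in> PC" for c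
    using that am unfolding PC_def by auto
  have pc_cset: "cset c \<subseteq> cset (Iv a b)" if "c \<in> PC" for c
    using that am unfolding PC_def by auto
  have pc_disj: "c = c'" if "c \<in> PC" "c' \<in> PC" "cset c \<inter> cset c' \<noteq> {}" for c c'
    using that am unfolding PC_def by (auto simp: disjoint_iff)
  have pc_fp: "subc c c'" if "c \<in> PC" "c' \<in> PC" "meets c c'" for c c'
    using that am unfolding PC_def meets_def subc_def by auto
  have pc_m1: "meets (Iv a b) c'" if "c \<in> PC" "meets c c'" for c c'
    using that am unfolding PC_def meets_def by auto
  have sub_piece: "cset ((E0(j := c)) k) \<subseteq> cset (E0 k)" if "A E0" "c \<in> PC" for E0 c k
    using that pc_cset Qj unfolding A_def by auto
  have lam_piece: "subc e c'" if "compok (G j) (N j) e" "subc e (Iv a b)" "e \<noteq> Iv a b" "meets e c'" "c' \<in> PC" for e c'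
  proof (cases e)
    case (Pt t) then show ?thesis using that(4) unfolding meets_def subc_def by auto
  next
    case (Iv c e')
    have d: "dyp (G j) c e'" using that(1) Iv unfolding compok_def by auto
    have "c < e'" using dyp_lt[OF d] .
    have s: "a \<le> c" "e' \<le> b" "(c,e') \<noteq> (a,b)" using that(2,3) Iv unfolding subc_def by auto
    have L: "lamC a b c e'" using dyp_lam[OF dyab d] .
    have "inhalf a b c e'"
      using L[unfolded lamC_def] s \<open>c < e'\<close> by auto
    then obtain mm where mm: "a + b = 2*mm" "e' \<le> mm \<or> mm \<le> c" unfolding inhalf_def by auto
    have "mm = m" using mm(1) m2 by linarith
    then show ?thesis using that(4,5) Iv mm(2) s \<open>c < e'\<close> unfolding PC_def meets_def subc_def by auto
  qed
  have fin': "finite (subdiv N p M Q j)"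
  proof -
    have "subdiv N p M Q j \<subseteq> M \<union> (\<Union>E0\<in>M. (\<lambda>c. E0(j := c)) ` PC)" using mem unfolding A_def by auto
    moreover have "finite (M \<union> (\<Union>E0\<in>M. (\<lambda>c. E0(j := c)) ` PC))" using fin unfolding PC_def by auto
    ultimately show ?thesis by (rule finite_subset)
  qed
  have ok': "\<forall>E\<in>subdiv N p M Q j. \<forall>k. compok (G k) (N k) (E k)"
  proof (intro ballI allI)
    fix E k assume "E \<in> subdiv N p M Q j"
    then consider "E \<in> M" | E0 c where "A E0" "c \<in> PC" "E = E0(j := c)" using mem by blast
    then show "compok (G k) (N k) (E k)"
    proof cases
      case 1 then show ?thesis using G(2) by blast
    next
      case 2 then show ?thesis using G(2) pc_ok unfolding A_def by (cases "k = j") auto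
    qed
  qed
  have disj': "\<forall>E\<in>subdiv N p M Q j. \<forall>E'\<in>subdiv N p M Q j. (\<forall>k. cset (E k) \<inter> cset (E' k) \<noteq> {}) \<longrightarrow> E = E'"
  proof (intro ballI impI)
    fix E E' assume EM: "E \<in> subdiv N p M Q j" and EM': "E' \<in> subdiv N p M Q j" and ne: "\<forall>k. cset (E k) \<inter> cset (E' k) \<noteq> {}"
    consider "E \<in> M" "\<not> A E" | E0 c where "A E0" "c \<in> PC" "E = E0(j := c)" using mem EM by blast
    then show "E = E'"
    proof cases
      case 1
      consider "E' \<in> M" "\<not> A E'" | E0' c' where "A E0'" "c' \<in> PC" "E' = E0'(j := c')" using mem EM' by blast
      then show ?thesis
      proof cases
        case 1 then show ?thesis using disjM ne \<open>E \<in> M\<close> by blast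
      next
        case 2
        have "\<forall>k. cset (E k) \<inter> cset (E0' k) \<noteq> {}" using ne sub_piece[OF 2(1,2)] 2(3) by blast
        then have "E = E0'" using disjM \<open>E \<in> M\<close> 2(1) unfolding A_def by blast
        then show ?thesis using \<open>\<not> A E\<close> 2(1) by simp
      qed
    next
      case 2
      consider "E' \<in> M" "\<not> A E'" | E0' c' where "A E0'" "c' \<in> PC" "E' = E0'(j := c')" using mem EM' by blast
      then show ?thesis
      proof cases
        case 1
        have "\<forall>k. cset (E0 k) \<inter> cset (E' k) \<noteq> {}" using ne sub_piece[OF 2(1,2)] 2(3) by blast
        then have "E0 = E'" using disjM \<open>E' \<in> M\<close> 2(1) unfolding A_def by blast
        then show ?thesis using \<open>\<not> A E'\<close> 2(1) by simp
      next
        case 3: 2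
        have "\<forall>k. cset (E0 k) \<inter> cset (E0' k) \<noteq> {}" using ne sub_piece[OF 2(1,2)] sub_piece[OF 3(1,2)] 2(3) 3(3) by blast
        then have "E0 = E0'" using disjM 2(1) 3(1) unfolding A_def by blast
        moreover have "c = c'" using pc_disj[OF 2(2) 3(2)] ne[rule_format, of j] 2(3) 3(3) by simp
        ultimately show ?thesis using 2(3) 3(3) by simp
      qed
    qed
  qed
  have cov': "\<forall>z\<in>cOmega N. \<exists>E\<in>subdiv N p M Q j. z \<in> eset E"
  proof
    fix z assume "z \<in> cOmega N"
    then obtain E where E: "E \<in> M" "z \<in> eset E" using covM by blast
    show "\<exists>E\<in>subdiv N p M Q j. z \<in> eset E"
    proof (cases "A E")
      case False then show ?thesis using E mem by blast
    next
      case True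
      then have zj: "z$j \<in> cset (Iv a b)" using E Qj unfolding A_def mem_eset by metis
      obtain c where c: "c \<in> PC" "z$j \<in> cset c"
      proof (cases "z$j < real_of_int m")
        case True then show ?thesis using that[of "Iv a m"] zj unfolding PC_def by auto
      next
        case False
        show ?thesis
        proof (cases "z$j = real_of_int m")
          case True then show ?thesis using that[of "Pt m"] unfolding PC_def by auto
        next
          case False then show ?thesis using that[of "Iv m b"] zj \<open>\<not> z$j < real_of_int m\<close> unfolding PC_def by auto
        qed
      qed
      have "E(j := c) \<in> subdiv N p M Q j" using mem True c(1) by blast
      moreover have "z \<in> eset (E(j := c))" using E(2) c(2) unfolding mem_eset by auto
      ultimately show ?thesis by blast
    qed
  qed
  have fp': "\<forall>E\<in>subdiv N p M Q j. \<forall>E'\<in>subdiv N p M Q j. (\<forall>k. meets (E k) (E' k)) \<longrightarrow> (\<forall>k. subc (E k) (E' k))"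
  proof (intro ballI impI)
    fix E E' assume EM: "E \<in> subdiv N p M Q j" and EM': "E' \<in> subdiv N p M Q j" and mt: "\<forall>k. meets (E k) (E' k)"
    consider "E \<in> M" "\<not> A E" | E0 c where "A E0" "c \<in> PC" "E = E0(j := c)" using mem EM by blast
    then show "\<forall>k. subc (E k) (E' k)"
    proof cases
      case 1
      consider "E' \<in> M" "\<not> A E'" | E0' c' where "A E0'" "c' \<in> PC" "E' = E0'(j := c')" using mem EM' by blast
      then show ?thesis
      proof cases
        case 1 then show ?thesis using fpM[rule_format, OF \<open>E \<in> M\<close> \<open>E' \<in> M\<close> mt[rule_format]] by simp
      next
        case 2
        have E0'M: "E0' \<in> M" using 2(1) unfolding A_def by simp
        have mk: "\<forall>k. meets (E k) (E0' k)"
        proof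
          fix k show "meets (E k) (E0' k)"
          proof (cases "k = j")
            case True
            then have h: "meets (E j) c'" using mt[rule_format, of j] 2(3) by simp
            have "meets (E j) (Iv a b)" by (rule meets_mono2[OF h]) (use pc_range[OF 2(2)] in auto)
            then show ?thesis using True 2(1) Qj unfolding A_def by simp
          next
            case False then show ?thesis using mt[rule_format, of k] 2(3) by simp
          qed
        qed
        have sub0: "\<forall>k. subc (E k) (E0' k)" using fpM[rule_format, OF \<open>E \<in> M\<close> E0'M mk[rule_format]] by simp
        have "eset E \<subseteq> D"
        proof -
          have "eset E \<subseteq> ebox E0'"
          proof
            fix z assume "z \<in> eset E"
            then have zk: "z$k \<in> cset (E k)" for k unfolding mem_eset by simp
            show "z \<in> ebox E0'" unfolding mem_ebox
            proof
              fix k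
              have b: "real_of_int (clo (E k)) \<le> z$k \<and> z$k \<le> real_of_int (chi (E k))" using cset_bounds[OF zk[of k]] .
              have "clo (E0' k) \<le> clo (E k)" "chi (E k) \<le> chi (E0' k)" using sub0 unfolding subc_def by auto
              then have "real_of_int (clo (E0' k)) \<le> real_of_int (clo (E k))" "real_of_int (chi (E k)) \<le> real_of_int (chi (E0' k))" by simp_all
              then show "real_of_int (clo (E0' k)) \<le> z$k \<and> z$k \<le> real_of_int (chi (E0' k))" using b by linarith
            qed
          qed
          also have "ebox E0' = closure (eset E0')"
          proof -
            have "\<forall>k. wfc (N k) (E0' k)" using wf[OF E0'M] by simp
            then show ?thesis using closure_eset[of N E0'] by simp
          qed
          also have "\<dots> \<subseteq> D"
          proof -
            have h: "eset E0' \<subseteq> subdiv_region N p Q j" using 2(1) unfolding A_def D_def by simp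
            show ?thesis using closure_minimal[OF h subdiv_region_closed] unfolding D_def .
          qed
          finally show ?thesis .
        qed
        then have "E j \<noteq> Q j" using \<open>\<not> A E\<close> \<open>E \<in> M\<close> unfolding A_def by simp
        show ?thesis
        proof
          fix k show "subc (E k) (E' k)"
          proof (cases "k = j")
            case True
            have "E0' j = Q j" using 2(1) unfolding A_def by simp
            then have c2: "subc (E j) (Iv a b)" using sub0[rule_format, of j] Qj by simp
            have c4: "meets (E j) c'" using mt[rule_format, of j] 2(3) by simp
            have c1: "compok (G j) (N j) (E j)" using G(2) \<open>E \<in> M\<close> by simp
            have c3: "E j \<noteq> Iv a b" using \<open>E j \<noteq> Q j\<close> Qj by simp
            have "subc (E j) c'" using lam_piece[OF c1 c2 c3 c4 2(2)] .
            then show ?thesis using True 2(3) by simp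
          next
            case False then show ?thesis using sub0 2(3) by simp
          qed
        qed
      qed
    next
      case 2
      have E0M: "E0 \<in> M" using 2(1) unfolding A_def by simp
      consider "E' \<in> M" "\<not> A E'" | E0' c' where "A E0'" "c' \<in> PC" "E' = E0'(j := c')" using mem EM' by blast
      then show ?thesis
      proof cases
        case 1
        have mk: "\<forall>k. meets (E0 k) (E' k)"
        proof
          fix k show "meets (E0 k) (E' k)"
          proof (cases "k = j")
            case True
            then have "meets c (E' j)" using mt[rule_format, of j] 2(3) by simp
            then show ?thesis using True pc_m1[OF 2(2)] 2(1) Qj unfolding A_def by auto
          next
            case False then show ?thesis using mt[rule_format, of k] 2(3) by simp
          qed
        qed
        have sub0: "\<forall>k. subc (E0 k) (E' k)" using fpM[rule_format, OF E0M \<open>E' \<in> M\<close> mk[rule_format]] by simp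
        show ?thesis
        proof
          fix k show "subc (E k) (E' k)"
          proof (cases "k = j")
            case True
            have "subc c (E0 j)" using pc_range[OF 2(2)] 2(1) Qj unfolding A_def subc_def by auto
            then show ?thesis using True 2(3) sub0 subc_trans by simp
          next
            case False then show ?thesis using sub0 2(3) by simp
          qed
        qed
      next
        case 3: 2
        have E0'M: "E0' \<in> M" using 3(1) unfolding A_def by simp
        have mk: "\<forall>k. meets (E0 k) (E0' k)"
        proof
          fix k show "meets (E0 k) (E0' k)"
          proof (cases "k = j")
            case True then show ?thesis using 2(1) 3(1) Qj \<open>a < b\<close> unfolding A_def meets_def by auto
          next
            case False then show ?thesis using mt[rule_format, of k] 2(3) 3(3) by simp
          qed
        qed
        have sub0: "\<forall>k. subc (E0 k) (E0' k)" using fpM[rule_format, OF E0M E0'M mk[rule_format]] by simp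
        show ?thesis
        proof
          fix k show "subc (E k) (E' k)"
          proof (cases "k = j")
            case True
            have "meets c c'" using mt[rule_format, of j] 2(3) 3(3) by simp
            then show ?thesis using True 2(3) 3(3) pc_fp[OF 2(2) 3(2)] by simp
          next
            case False then show ?thesis using sub0 2(3) 3(3) by simp
          qed
        qed
      qed
    qed
  qed
  show ?thesis unfolding INV_def using fin' ok' disj' cov' fp' G(1) by blast
qed

lemma mesh_INV: "mesh_gen N p M \<Longrightarrow> INV N p M"
proof (induction rule: mesh_gen.induct)
  case (init G) then show ?case by (rule tensor_INV)
next
  case (step T Q j) then show ?case using subdiv_INV by blast
qed



abbreviation AR0 :: "real filter" where "AR0 \<equiv> at_right (0::real)"

lemma ev_pos: "\<forall>\<^sub>F \<eta> in AR0. 0 < \<eta>"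
  by (rule eventually_at_right_less)

lemma ev_lt: "a < c \<Longrightarrow> \<forall>\<^sub>F \<eta> in AR0. a + \<eta> * s < (c::real)"
proof -
  assume "a < c"
  have "((\<lambda>\<eta>. a + \<eta> * s) \<longlongrightarrow> a + 0 * s) AR0" by (intro tendsto_intros)
  then show ?thesis using \<open>a < c\<close> by (auto dest: order_tendstoD(2))
qed

lemma ev_gt: "c < a \<Longrightarrow> \<forall>\<^sub>F \<eta> in AR0. c < a + \<eta> * (s::real)"
proof -
  assume "c < a"
  have "((\<lambda>\<eta>. a + \<eta> * s) \<longlongrightarrow> a + 0 * s) AR0" by (intro tendsto_intros)
  then show ?thesis using \<open>c < a\<close> by (auto dest: order_tendstoD(1))
qed

lemma ev_ex: "\<forall>\<^sub>F \<eta> in AR0. P \<eta> \<Longrightarrow> \<exists>\<eta>>0. P \<eta>"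
proof -
  assume "\<forall>\<^sub>F \<eta> in AR0. P \<eta>"
  then obtain b where "b > 0" "\<forall>y>0. y < b \<longrightarrow> P y" unfolding eventually_at_right_field by auto
  then show ?thesis by (intro exI[of _ "b/2"]) auto
qed

lemma ev_two: "\<forall>\<^sub>F \<eta> in AR0. P \<eta> \<Longrightarrow> \<exists>\<eta>1 \<eta>2. 0 < \<eta>1 \<and> \<eta>1 < \<eta>2 \<and> P \<eta>1 \<and> P \<eta>2"
proof -
  assume "\<forall>\<^sub>F \<eta> in AR0. P \<eta>"
  then obtain b where "b > 0" "\<forall>y>0. y < b \<longrightarrow> P y" unfolding eventually_at_right_field by auto
  then show ?thesis by (intro exI[of _ "b/3"] exI[of _ "b/2"]) auto
qed

lemma ev_False: "\<forall>\<^sub>F \<eta> in AR0. False \<Longrightarrow> False"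
  by (simp add: eventually_False)

lemma freq_ev_contra: "\<exists>\<^sub>F \<eta> in AR0. P \<eta> \<Longrightarrow> \<forall>\<^sub>F \<eta> in AR0. \<not> P \<eta> \<Longrightarrow> False"
  unfolding frequently_def by simp

lemma ray_comp [simp]: "(w + \<eta> *\<^sub>R v) $ k = w$k + \<eta> * v$k"
  by simp

definition inb :: "('d \<Rightarrow> real) \<Rightarrow> ('d \<Rightarrow> real) \<Rightarrow> real^'d \<Rightarrow> bool" where
  "inb lo hi z \<longleftrightarrow> (\<forall>k. lo k \<le> z$k \<and> z$k \<le> hi k)"

definition dirOK :: "('d \<Rightarrow> real) \<Rightarrow> ('d \<Rightarrow> real) \<Rightarrow> real^'d \<Rightarrow> real^'d \<Rightarrow> bool" where
  "dirOK lo hi w v \<longleftrightarrow> (\<forall>k. (0 < v$k \<longrightarrow> w$k < hi k) \<and> (v$k < 0 \<longrightarrow> lo k < w$k))"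

lemma K1:
  fixes w v :: "real^'d::finite"
  assumes "inb lo hi w" "dirOK lo hi w v"
  shows "\<forall>\<^sub>F \<eta> in AR0. inb lo hi (w + \<eta> *\<^sub>R v)"
  unfolding inb_def
proof (rule eventually_all_finite)
  fix k
  have w: "lo k \<le> w$k" "w$k \<le> hi k" using assms(1) unfolding inb_def by auto
  have lo: "\<forall>\<^sub>F \<eta> in AR0. lo k \<le> w$k + \<eta> * v$k"
  proof (cases "v$k < 0")
    case True
    then have "lo k < w$k" using assms(2) unfolding dirOK_def by auto
    then show ?thesis using ev_gt[of "lo k" "w$k" "v$k"] by (auto elim: eventually_mono)
  next
    case False
    show ?thesis using ev_pos
    proof (rule eventually_mono)
      fix \<eta> :: real assume "0 < \<eta>"
      then have "0 \<le> \<eta> * v$k" using False by simp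
      then show "lo k \<le> w$k + \<eta> * v$k" using w by linarith
    qed
  qed
  have hi: "\<forall>\<^sub>F \<eta> in AR0. w$k + \<eta> * v$k \<le> hi k"
  proof (cases "0 < v$k")
    case True
    then have "w$k < hi k" using assms(2) unfolding dirOK_def by auto
    then show ?thesis using ev_lt[of "w$k" "hi k" "v$k"] by (auto elim: eventually_mono)
  next
    case False
    show ?thesis using ev_pos
    proof (rule eventually_mono)
      fix \<eta> :: real assume "0 < \<eta>"
      then have "\<eta> * v$k \<le> 0" using False by (simp add: mult_nonneg_nonpos)
      then show "w$k + \<eta> * v$k \<le> hi k" using w by linarith
    qed
  qed
  show "\<forall>\<^sub>F \<eta> in AR0. lo k \<le> (w + \<eta> *\<^sub>R v) $ k \<and> (w + \<eta> *\<^sub>R v) $ k \<le> hi k"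
    using eventually_conj[OF lo hi] by simp
qed

lemma K2:
  fixes w v :: "real^'d::finite"
  assumes fr: "\<exists>\<^sub>F \<eta> in AR0. inb lo hi (w + \<eta> *\<^sub>R v)"
  shows "inb lo hi w \<and> dirOK lo hi w v"
proof -
  have A: "lo k \<le> w$k" for k
  proof (rule ccontr)
    assume "\<not> lo k \<le> w$k"
    then have "\<forall>\<^sub>F \<eta> in AR0. w$k + \<eta> * v$k < lo k" using ev_lt by auto
    then have "\<forall>\<^sub>F \<eta> in AR0. \<not> inb lo hi (w + \<eta> *\<^sub>R v)" unfolding inb_def
      by (rule eventually_mono) (auto simp: not_le)
    then show False using freq_ev_contra[OF fr] by blast
  qed
  have B: "w$k \<le> hi k" for k
  proof (rule ccontr)
    assume "\<not> w$k \<le> hi k"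
    then have "\<forall>\<^sub>F \<eta> in AR0. hi k < w$k + \<eta> * v$k" using ev_gt by auto
    then have "\<forall>\<^sub>F \<eta> in AR0. \<not> inb lo hi (w + \<eta> *\<^sub>R v)" unfolding inb_def
      by (rule eventually_mono) (auto simp: not_le)
    then show False using freq_ev_contra[OF fr] by blast
  qed
  have C: "0 < v$k \<longrightarrow> w$k < hi k" for k
  proof (rule ccontr)
    assume "\<not> (0 < v$k \<longrightarrow> w$k < hi k)"
    then have c: "0 < v$k" "hi k \<le> w$k" by auto
    have "\<forall>\<^sub>F \<eta> in AR0. \<not> inb lo hi (w + \<eta> *\<^sub>R v)" using ev_pos
    proof (rule eventually_mono)
      fix \<eta> :: real assume "0 < \<eta>"
      then have "0 < \<eta> * v$k" using c by simp
      then show "\<not> inb lo hi (w + \<eta> *\<^sub>R v)" unfolding inb_def using c by (auto simp: not_le intro!: exI[of _ k])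
    qed
    then show False using freq_ev_contra[OF fr] by blast
  qed
  have D: "v$k < 0 \<longrightarrow> lo k < w$k" for k
  proof (rule ccontr)
    assume "\<not> (v$k < 0 \<longrightarrow> lo k < w$k)"
    then have c: "v$k < 0" "w$k \<le> lo k" by auto
    have "\<forall>\<^sub>F \<eta> in AR0. \<not> inb lo hi (w + \<eta> *\<^sub>R v)" using ev_pos
    proof (rule eventually_mono)
      fix \<eta> :: real assume "0 < \<eta>"
      then have "\<eta> * v$k < 0" using c by (simp add: mult_pos_neg)
      then show "\<not> inb lo hi (w + \<eta> *\<^sub>R v)" unfolding inb_def using c by (auto simp: not_le intro!: exI[of _ k])
    qed
    then show False using freq_ev_contra[OF fr] by blast
  qed
  show ?thesis unfolding inb_def dirOK_def using A B C D by blast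
qed

lemma K3:
  fixes w v :: "real^'d::finite"
  assumes "inb lo hi w" "dirOK lo hi w v" "\<forall>k. v$k = 0 \<longrightarrow> lo k < w$k \<and> w$k < hi k"
  shows "\<forall>\<^sub>F \<eta> in AR0. \<forall>k. lo k < (w + \<eta> *\<^sub>R v)$k \<and> (w + \<eta> *\<^sub>R v)$k < hi k"
proof (rule eventually_all_finite)
  fix k
  have w: "lo k \<le> w$k" "w$k \<le> hi k" using assms(1) unfolding inb_def by auto
  consider "v$k = 0" | "0 < v$k" | "v$k < 0" by linarith
  then show "\<forall>\<^sub>F \<eta> in AR0. lo k < (w + \<eta> *\<^sub>R v)$k \<and> (w + \<eta> *\<^sub>R v)$k < hi k"
  proof cases
    case 1 then show ?thesis using assms(3) by simp
  next
    case 2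
    then have h: "w$k < hi k" using assms(2) unfolding dirOK_def by auto
    have "\<forall>\<^sub>F \<eta> in AR0. lo k < w$k + \<eta> * v$k" using ev_pos
    proof (rule eventually_mono)
      fix \<eta> :: real assume "0 < \<eta>" then have "0 < \<eta> * v$k" using 2 by simp
      then show "lo k < w$k + \<eta> * v$k" using w by linarith
    qed
    then show ?thesis using eventually_conj[OF _ ev_lt[OF h, of "v$k"]] by simp
  next
    case 3
    then have h: "lo k < w$k" using assms(2) unfolding dirOK_def by auto
    have "\<forall>\<^sub>F \<eta> in AR0. w$k + \<eta> * v$k < hi k" using ev_pos
    proof (rule eventually_mono)
      fix \<eta> :: real assume "0 < \<eta>" then have "\<eta> * v$k < 0" using 3 by (simp add: mult_pos_neg)
      then show "w$k + \<eta> * v$k < hi k" using w by linarith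
    qed
    then show ?thesis using eventually_conj[OF ev_gt[OF h, of "v$k"]] by simp
  qed
qed

lemma pigeon:
  assumes fin: "finite S" and ev: "\<forall>\<^sub>F \<eta> in AR0. \<exists>E\<in>S. P E \<eta>"
  shows "\<exists>E\<in>S. \<exists>\<^sub>F \<eta> in AR0. P E \<eta>"
proof (rule ccontr)
  assume "\<not> ?thesis"
  then have "\<forall>E\<in>S. \<forall>\<^sub>F \<eta> in AR0. \<not> P E \<eta>" unfolding frequently_def by simp
  then have a: "\<forall>\<^sub>F \<eta> in AR0. \<forall>E\<in>S. \<not> P E \<eta>" by (rule eventually_ball_finite[OF fin])
  have "\<forall>\<^sub>F \<eta> in AR0. False"
    by (rule eventually_mono[OF eventually_conj[OF a ev]]) auto
  then show False by (rule ev_False)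
qed

lemma convex_ray:
  fixes w v :: "real^'d::finite"
  assumes C: "convex C" and fr: "\<exists>\<^sub>F \<eta> in AR0. w + \<eta> *\<^sub>R v \<in> C"
  shows "\<forall>\<^sub>F \<eta> in AR0. w + \<eta> *\<^sub>R v \<in> C"
proof -
  have "\<exists>\<^sub>F \<eta> in AR0. w + \<eta> *\<^sub>R v \<in> C \<and> 0 < \<eta>" using frequently_eventually_frequently[OF fr ev_pos] .
  then have "\<exists>\<eta>. w + \<eta> *\<^sub>R v \<in> C \<and> 0 < \<eta>" by (rule frequently_ex)
  then obtain \<eta>1 where e1: "w + \<eta>1 *\<^sub>R v \<in> C" "0 < \<eta>1" by blast
  show ?thesis unfolding eventually_at_right_field
  proof (intro exI[of _ \<eta>1] conjI allI impI)
    show "0 < \<eta>1" by fact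
    fix y :: real assume y: "0 < y" "y < \<eta>1"
    have "\<forall>\<^sub>F \<eta> in AR0. 0 + \<eta> * 1 < y" using ev_lt[OF y(1)] .
    then have "\<exists>\<^sub>F \<eta> in AR0. w + \<eta> *\<^sub>R v \<in> C \<and> \<eta> < y" using frequently_eventually_frequently[OF fr] by simp
    then have "\<exists>\<^sub>F \<eta> in AR0. (w + \<eta> *\<^sub>R v \<in> C \<and> \<eta> < y) \<and> 0 < \<eta>" by (rule frequently_eventually_frequently[OF _ ev_pos])
    then have "\<exists>\<eta>. (w + \<eta> *\<^sub>R v \<in> C \<and> \<eta> < y) \<and> 0 < \<eta>" by (rule frequently_ex)
    then obtain \<eta>2 where e2: "w + \<eta>2 *\<^sub>R v \<in> C" "\<eta>2 < y" "0 < \<eta>2" by blast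
    define t where "t = (y - \<eta>2) / (\<eta>1 - \<eta>2)"
    have t: "0 \<le> t" "t \<le> 1" unfolding t_def using y e2 by (auto simp: divide_le_eq)
    have ne: "\<eta>1 - \<eta>2 \<noteq> 0" using y e2 by linarith
    have h0: "t * (\<eta>1 - \<eta>2) = y - \<eta>2" unfolding t_def using ne by simp
    have h1: "(1 - t) * \<eta>2 + t * \<eta>1 = \<eta>2 + t * (\<eta>1 - \<eta>2)" by (simp add: algebra_simps)
    have co: "(1 - t) * \<eta>2 + t * \<eta>1 = y" using h0 h1 by simp
    have "(1 - t) *\<^sub>R (w + \<eta>2 *\<^sub>R v) + t *\<^sub>R (w + \<eta>1 *\<^sub>R v) \<in> C"
      using convexD[OF C e2(1) e1(1), of "1 - t" t] t by simp
    moreover have "(1 - t) *\<^sub>R (w + \<eta>2 *\<^sub>R v) + t *\<^sub>R (w + \<eta>1 *\<^sub>R v) = w + ((1 - t) * \<eta>2 + t * \<eta>1) *\<^sub>R v"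
      by (simp add: algebra_simps)
    ultimately show "w + y *\<^sub>R v \<in> C" using co by simp
  qed
qed

lemma ENT:
  fixes w v :: "real^'d::finite"
  assumes inv: "INV N p M" and ev: "\<forall>\<^sub>F \<eta> in AR0. w + \<eta> *\<^sub>R v \<in> cOmega N"
  shows "\<exists>E\<in>M. \<forall>\<^sub>F \<eta> in AR0. w + \<eta> *\<^sub>R v \<in> eset E"
proof -
  have fin: "finite M" and cov: "\<forall>z\<in>cOmega N. \<exists>E\<in>M. z \<in> eset E" using inv unfolding INV_def by simp_all
  have "\<forall>\<^sub>F \<eta> in AR0. \<exists>E\<in>M. w + \<eta> *\<^sub>R v \<in> eset E"
    by (rule eventually_mono[OF ev]) (use cov in simp)
  from pigeon[OF fin this] obtain E where "E \<in> M" "\<exists>\<^sub>F \<eta> in AR0. w + \<eta> *\<^sub>R v \<in> eset E" by blast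
  then show ?thesis using convex_ray[OF convex_eset[of E]] by auto
qed



lemma cOmega_inb: "z \<in> cOmega N \<longleftrightarrow> inb (\<lambda>k. 0) (\<lambda>k. real (N k)) z"
  unfolding cOmega_def inb_def by simp

lemma ebox_inb: "z \<in> ebox E \<longleftrightarrow> inb (\<lambda>k. real_of_int (clo (E k))) (\<lambda>k. real_of_int (chi (E k))) z"
  unfolding mem_ebox inb_def by simp

definition elo :: "'d::finite ent \<Rightarrow> 'd \<Rightarrow> real" where "elo E = (\<lambda>k. real_of_int (clo (E k)))"
definition ehi :: "'d::finite ent \<Rightarrow> 'd \<Rightarrow> real" where "ehi E = (\<lambda>k. real_of_int (chi (E k)))"

lemma ebox_inb2: "z \<in> ebox E \<longleftrightarrow> inb (elo E) (ehi E) z"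
  unfolding elo_def ehi_def by (rule ebox_inb)

lemma eset_inb: "z \<in> eset E \<Longrightarrow> inb (elo E) (ehi E) z"
  using eset_sub_ebox ebox_inb2 by blast

lemma ev_eset_K2:
  fixes w v :: "real^'d::finite"
  assumes "\<forall>\<^sub>F \<eta> in AR0. w + \<eta> *\<^sub>R v \<in> eset E"
  shows "w \<in> ebox E \<and> dirOK (elo E) (ehi E) w v"
proof -
  have "\<forall>\<^sub>F \<eta> in AR0. inb (elo E) (ehi E) (w + \<eta> *\<^sub>R v)"
    using assms by (rule eventually_mono) (rule eset_inb)
  then have "\<exists>\<^sub>F \<eta> in AR0. inb (elo E) (ehi E) (w + \<eta> *\<^sub>R v)"
    by (rule eventually_frequently[OF trivial_limit_at_right_real])
  then show ?thesis using K2 ebox_inb2 by blast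
qed

lemma INV_eset_cOmega: "INV N p M \<Longrightarrow> E \<in> M \<Longrightarrow> eset E \<subseteq> cOmega N"
proof
  fix z assume inv: "INV N p M" and EM: "E \<in> M" and z: "z \<in> eset E"
  show "z \<in> cOmega N" unfolding cOmega_def
  proof (safe)
    fix k
    have w: "wfc (N k) (E k)" using INV_wf[OF inv EM] .
    have "z$k \<in> cset (E k)" using z unfolding mem_eset by simp
    then have "real_of_int (clo (E k)) \<le> z$k \<and> z$k \<le> real_of_int (chi (E k))" by (rule cset_bounds)
    moreover have "0 \<le> clo (E k)" "chi (E k) \<le> int (N k)" using w unfolding wfc_def by auto
    ultimately show "0 \<le> z$k" "z$k \<le> real (N k)" by (smt (verit) of_int_0_le_iff of_int_le_iff of_int_of_nat_eq)+
  qed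
qed

lemma INV_disj: "INV N p M \<Longrightarrow> E \<in> M \<Longrightarrow> E' \<in> M \<Longrightarrow> (\<And>k. cset (E k) \<inter> cset (E' k) \<noteq> {}) \<Longrightarrow> E = E'"
  unfolding INV_def by blast

lemma INV_fp: "INV N p M \<Longrightarrow> E \<in> M \<Longrightarrow> E' \<in> M \<Longrightarrow> (\<And>k. meets (E k) (E' k)) \<Longrightarrow> subc (E k) (E' k)"
  unfolding INV_def by blast

lemma meets_point: "z \<in> eset E \<Longrightarrow> z \<in> ebox E' \<Longrightarrow> meets (E k) (E' k)"
  unfolding mem_eset mem_ebox by (meson meets_of)

lemma iv_sub_cset: "subc (Iv c d) (Iv c' d') \<Longrightarrow> cset (Iv c d) \<subseteq> cset (Iv c' d')"
  unfolding subc_def by auto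

lemma ctr_iv: "c < d \<Longrightarrow> ctr (Iv c d) \<in> cset (Iv c d)"
  unfolding ctr_def by auto

lemma iv_share:
  assumes "a < b" "a' < b'" "a = a' \<or> b = b'"
  shows "cset (Iv a b) \<inter> cset (Iv a' b') \<noteq> {}"
proof (cases "a = a'")
  case True
  have "real_of_int a + 1/2 \<in> cset (Iv a b)" "real_of_int a + 1/2 \<in> cset (Iv a' b')"
    using assms True by auto
  then show ?thesis by blast
next
  case False
  then have "b = b'" using assms by auto
  have "real_of_int b - 1/2 \<in> cset (Iv a b)" "real_of_int b - 1/2 \<in> cset (Iv a' b')"
    using assms \<open>b = b'\<close> by auto
  then show ?thesis by blast
qed

lemma face_touch:
  assumes inv: "INV N p M" and Npos: "N i \<ge> 1" and EM: "E \<in> M" and Ei: "E i = Pt n"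
    and oth: "\<forall>k. k \<noteq> i \<longrightarrow> is_iv (E k)"
  shows "\<exists>Q'\<in>M. is_cell Q' \<and> (clo (Q' i) = n \<or> chi (Q' i) = n) \<and> (\<forall>k. subc (E k) (Q' k))"
proof -
  have wf: "\<forall>k. wfc (N k) (E k)" using INV_wf[OF inv EM] by blast
  define e where "e = ectr E"
  have eE: "e \<in> eset E" unfolding e_def using ectr_in[OF wf] .
  have "e$i \<in> cset (E i)" using eE unfolding mem_eset by blast
  then have ei: "e$i = real_of_int n" using Ei by simp
  have nN: "0 \<le> n" "n \<le> int (N i)" using wf[rule_format, of i] Ei unfolding wfc_def by auto
  define s :: real where "s = (if n < int (N i) then 1 else -1)"
  define v :: "real^'a" where "v = (\<chi> k. if k = i then s else 0)"
  have eO: "e \<in> cOmega N" using INV_eset_cOmega[OF inv EM] eE by blast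
  have dO: "dirOK (\<lambda>k. 0) (\<lambda>k. real (N k)) e v"
    unfolding dirOK_def v_def s_def using ei nN Npos by auto
  have evO: "\<forall>\<^sub>F \<eta> in AR0. e + \<eta> *\<^sub>R v \<in> cOmega N"
    unfolding cOmega_inb using K1[OF eO[unfolded cOmega_inb] dO] .
  obtain E2 where E2M: "E2 \<in> M" and ev2: "\<forall>\<^sub>F \<eta> in AR0. e + \<eta> *\<^sub>R v \<in> eset E2"
    using ENT[OF inv evO] by blast
  have eB: "e \<in> ebox E2" using ev_eset_K2[OF ev2] by blast
  have sub: "subc (E k) (E2 k)" for k
    by (rule INV_fp[OF inv EM E2M]) (rule meets_point[OF eE eB])
  obtain \<eta>1 \<eta>2 where et: "0 < \<eta>1" "\<eta>1 < \<eta>2" "e + \<eta>1 *\<^sub>R v \<in> eset E2" "e + \<eta>2 *\<^sub>R v \<in> eset E2"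
    using ev_two[OF ev2] by blast
  have iv2: "is_iv (E2 k)" for k
  proof (cases "k = i")
    case True
    have "(e + \<eta>1 *\<^sub>R v)$i \<in> cset (E2 i)" "(e + \<eta>2 *\<^sub>R v)$i \<in> cset (E2 i)" using et unfolding mem_eset by auto
    moreover have "(e + \<eta>1 *\<^sub>R v)$i \<noteq> (e + \<eta>2 *\<^sub>R v)$i" using et(1,2) unfolding v_def s_def by auto
    ultimately show ?thesis using True by (cases "E2 i") auto
  next
    case False
    then have "is_iv (E k)" using oth by auto
    then obtain c d where "E k = Iv c d" by (cases "E k") auto
    moreover have "c < d" using wf[rule_format, of k] \<open>E k = Iv c d\<close> unfolding wfc_def by auto
    ultimately show ?thesis using sub[of k] unfolding subc_def by (cases "E2 k") auto
  qed
  have cell2: "is_cell E2" unfolding is_cell_def using iv2 by auto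
  have "clo (E2 i) = n \<or> chi (E2 i) = n"
  proof (rule ccontr)
    assume "\<not> ?thesis"
    moreover have "real_of_int (clo (E2 i)) \<le> e$i \<and> e$i \<le> real_of_int (chi (E2 i))" using eB unfolding mem_ebox by auto
    ultimately have strict: "clo (E2 i) < n" "n < chi (E2 i)" using ei by auto
    have "cset (E k) \<inter> cset (E2 k) \<noteq> {}" for k
    proof (cases "k = i")
      case True
      have "e$i \<in> cset (E2 i)" using iv2[of i] strict ei by (simp add: cset_iff)
      then show ?thesis using eE True unfolding mem_eset by blast
    next
      case False
      have "(e + \<eta>1 *\<^sub>R v)$k = e$k" using False unfolding v_def by simp
      then have "e$k \<in> cset (E2 k)" using et(3) unfolding mem_eset by metis
      then show ?thesis using eE unfolding mem_eset by blast
    qed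
    then have "E = E2" using INV_disj[OF inv EM E2M] by blast
    then show False using Ei iv2[of i] by auto
  qed
  then show ?thesis using E2M cell2 sub by blast
qed



lemma card_bool2: "card (UNIV :: (bool \<times> bool) set) = 4"
  by (simp add: UNIV_Times_UNIV[symmetric] card_cartesian_product del: UNIV_Times_UNIV)

lemma tj_card:
  fixes T Q :: "'d::finite ent"
  assumes inv: "INV N p M" and TM: "T \<in> M" and ij: "i \<noteq> j" and Ti: "T i = Pt n" and Tj: "T j = Pt tj"
    and Toth: "\<forall>k. k \<noteq> i \<longrightarrow> k \<noteq> j \<longrightarrow> is_iv (T k)"
    and QM: "Q \<in> M" and Qc: "is_cell Q" and TQ: "\<forall>k. subc (T k) (Q k)"
    and nQ: "clo (Q i) < n \<and> n < chi (Q i)" and tjQ: "tj = clo (Q j) \<or> tj = chi (Q j)"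
    and cd: "CARD('d) \<ge> 2"
  shows "card {F \<in> M. edim F = CARD('d) - 1 \<and> eset T \<subseteq> frontier (eset F)} < 4"
proof -
  define S where "S = {F \<in> M. edim F = CARD('d) - 1 \<and> eset T \<subseteq> frontier (eset F)}"
  have fin: "finite M" using inv unfolding INV_def by simp
  have finS: "finite S" unfolding S_def using fin by simp
  have wfT: "\<forall>k. wfc (N k) (T k)" using INV_wf[OF inv TM] by blast
  have wfQ: "\<forall>k. wfc (N k) (Q k)" using INV_wf[OF inv QM] by blast
  have ctrT: "\<And>k. ctr (T k) \<in> cset (T k)" using ctr_in wfT by blast
  have Tk_in: "ctr (T k) \<in> cset (F k)" if hh: "k \<noteq> i" "k \<noteq> j" "subc (T k) (F k)" "is_iv (F k)" for k F
  proof -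
    obtain c d where cd: "T k = Iv c d" using Toth hh(1,2) by (cases "T k") auto
    obtain c' d' where cd': "F k = Iv c' d'" using hh(4) by (cases "F k") auto
    have "cset (T k) \<subseteq> cset (F k)" using iv_sub_cset[of c d c' d'] hh(3) cd cd' by simp
    then show ?thesis using ctrT[of k] by blast
  qed
  have Qiv: "\<And>k. is_iv (Q k)" using Qc unfolding is_cell_def by auto
  define slot where "slot F = (is_iv (F j), if is_iv (F j) then clo (F j) = tj else clo (F i) = n)" for F :: "'d ent"
  define bad where "bad = (True, clo (Q j) = tj)"
  have props: "F \<in> M \<and> (\<forall>k. subc (T k) (F k)) \<and> (\<forall>k. k \<noteq> i \<longrightarrow> k \<noteq> j \<longrightarrow> is_iv (F k)) \<and>
     ((F i = Pt n \<and> is_iv (F j) \<and> (clo (F j) = tj \<or> chi (F j) = tj)) \<or>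
      (F j = Pt tj \<and> is_iv (F i) \<and> (clo (F i) = n \<or> chi (F i) = n)))" if FS: "F \<in> S" for F
  proof -
    have FM: "F \<in> M" and ed: "edim F = CARD('d) - 1" and fr: "eset T \<subseteq> frontier (eset F)" using FS unfolding S_def by auto
    have wfF: "\<forall>k. wfc (N k) (F k)" using INV_wf[OF inv FM] by blast
    have "eset T \<subseteq> closure (eset F)" using fr unfolding frontier_def by auto
    then have "eset T \<subseteq> ebox F" using closure_eset[OF wfF] by simp
    moreover have cT: "ectr T \<in> eset T" using ectr_in[OF wfT] .
    ultimately have "ectr T \<in> ebox F" by blast
    then have sub: "\<forall>k. subc (T k) (F k)" using INV_fp[OF inv TM FM] meets_point[OF cT] by blast
    have "card {k. is_iv (F k)} = CARD('d) - 1" using ed unfolding edim_def .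
    moreover have "card {k. \<not> is_iv (F k)} = CARD('d) - card {k. is_iv (F k)}"
    proof -
      have "{k. \<not> is_iv (F k)} = UNIV - {k. is_iv (F k)}" by auto
      then show ?thesis by (simp add: card_Diff_subset)
    qed
    ultimately have c1: "card {k. \<not> is_iv (F k)} = 1" using cd by simp
    then obtain k0 where k0: "{k. \<not> is_iv (F k)} = {k0}" by (rule card_1_singletonE)
    have ivF: "\<forall>k. k \<noteq> k0 \<longrightarrow> is_iv (F k)" using k0 by auto
    have nk0: "\<not> is_iv (F k0)" using k0 by auto
    have k0ij: "k0 = i \<or> k0 = j"
    proof (rule ccontr)
      assume "\<not> ?thesis"
      then have "is_iv (T k0)" using Toth by auto
      then have "clo (T k0) < chi (T k0)" using wfT unfolding wfc_def by auto
      moreover have "chi (F k0) = clo (F k0)" using nk0 by (cases "F k0") auto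
      ultimately show False using sub[rule_format, of k0] unfolding subc_def by auto
    qed
    have oth: "\<forall>k. k \<noteq> i \<longrightarrow> k \<noteq> j \<longrightarrow> is_iv (F k)" using ivF k0ij by auto
    have ctrF: "\<And>k. k \<noteq> i \<Longrightarrow> k \<noteq> j \<Longrightarrow> ctr (T k) \<in> cset (F k)" using Tk_in sub oth by blast
    show ?thesis
    proof (cases "k0 = i")
      case True
      then have Fi: "F i = Pt n" using nk0 sub[rule_format, of i] Ti unfolding subc_def by (cases "F i") auto
      have Fj: "is_iv (F j)" using ivF True ij by auto
      then obtain a b where ab: "F j = Iv a b" by (cases "F j") auto
      have "a \<le> tj" "tj \<le> b" using sub[rule_format, of j] Tj ab unfolding subc_def by auto
      moreover have "\<not> (a < tj \<and> tj < b)"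
      proof
        assume st: "a < tj \<and> tj < b"
        have "cset (F k) \<inter> cset (T k) \<noteq> {}" for k
        proof -
          consider "k = i" | "k = j" | "k \<noteq> i" "k \<noteq> j" by blast
          then show ?thesis
          proof cases
            case 1 then show ?thesis using Fi Ti by simp
          next
            case 2 then show ?thesis using ab Tj st by auto
          next
            case 3 then show ?thesis using ctrF ctrT by blast
          qed
        qed
        then have "F = T" using INV_disj[OF inv FM TM] by blast
        then show False using Fj Tj by simp
      qed
      ultimately show ?thesis using FM sub oth Fi Fj ab by auto
    next
      case False
      then have k0j: "k0 = j" using k0ij by simp
      then have Fj: "F j = Pt tj" using nk0 sub[rule_format, of j] Tj unfolding subc_def by (cases "F j") auto
      have Fi: "is_iv (F i)" using ivF k0j ij by auto
      then obtain a b where ab: "F i = Iv a b" by (cases "F i") auto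
      have "a \<le> n" "n \<le> b" using sub[rule_format, of i] Ti ab unfolding subc_def by auto
      moreover have "\<not> (a < n \<and> n < b)"
      proof
        assume st: "a < n \<and> n < b"
        have "cset (F k) \<inter> cset (T k) \<noteq> {}" for k
        proof -
          consider "k = i" | "k = j" | "k \<noteq> i" "k \<noteq> j" by blast
          then show ?thesis
          proof cases
            case 1 then show ?thesis using ab Ti st by auto
          next
            case 2 then show ?thesis using Fj Tj by simp
          next
            case 3 then show ?thesis using ctrF ctrT by blast
          qed
        qed
        then have "F = T" using INV_disj[OF inv FM TM] by blast
        then show False using Fi Ti by simp
      qed
      ultimately show ?thesis using FM sub oth Fj Fi ab by auto
    qed
  qed
  have lohi: "clo c < chi c" if "is_iv c" "c = F k" "F \<in> M" for c F k
    using INV_wf[OF inv that(3), of k] that unfolding wfc_def by auto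
  have inj: "inj_on slot S"
  proof (rule inj_onI)
    fix F F' assume FS: "F \<in> S" and FS': "F' \<in> S" and eq: "slot F = slot F'"
    note P = props[OF FS] and P' = props[OF FS']
    have FM: "F \<in> M" and FM': "F' \<in> M" using P P' by auto
    have common: "cset (F k) \<inter> cset (F' k) \<noteq> {}" if "k \<noteq> i" "k \<noteq> j" for k
      using Tk_in[OF that _ _] P P' that by (metis disjoint_iff)
    show "F = F'"
    proof (cases "is_iv (F j)")
      case True
      then have ivj': "is_iv (F' j)" using eq unfolding slot_def by simp
      have Fi: "F i = Pt n" "F' i = Pt n" using P P' True ivj' by auto
      obtain a b where ab: "F j = Iv a b" using True by (cases "F j") auto
      obtain a' b' where ab': "F' j = Iv a' b'" using ivj' by (cases "F' j") auto
      have "a < b" "a' < b'" using lohi[OF True refl FM] lohi[OF ivj' refl FM'] ab ab' by auto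
      moreover have "tj = a \<or> tj = b" "tj = a' \<or> tj = b'" using P P' ab ab' True ivj' by auto
      moreover have "(a = tj) = (a' = tj)" using eq ab ab' True ivj' unfolding slot_def by simp
      ultimately have "cset (F j) \<inter> cset (F' j) \<noteq> {}" using iv_share ab ab' by metis
      then have "cset (F k) \<inter> cset (F' k) \<noteq> {}" for k using common Fi by (cases "k = i"; cases "k = j") auto
      then show ?thesis using INV_disj[OF inv FM FM'] by blast
    next
      case False
      then have ivj': "\<not> is_iv (F' j)" using eq unfolding slot_def by simp
      have Fj: "F j = Pt tj" "F' j = Pt tj" "is_iv (F i)" "is_iv (F' i)" using P P' False ivj' by auto
      obtain a b where ab: "F i = Iv a b" using Fj(3) by (cases "F i") auto
      obtain a' b' where ab': "F' i = Iv a' b'" using Fj(4) by (cases "F' i") auto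
      have "a < b" "a' < b'" using lohi[OF Fj(3) refl FM] lohi[OF Fj(4) refl FM'] ab ab' by auto
      moreover have "n = a \<or> n = b" "n = a' \<or> n = b'" using P P' ab ab' False ivj' Fj by auto
      moreover have "(a = n) = (a' = n)" using eq ab ab' False ivj' unfolding slot_def by simp
      ultimately have "cset (F i) \<inter> cset (F' i) \<noteq> {}" using iv_share ab ab' by metis
      then have "cset (F k) \<inter> cset (F' k) \<noteq> {}" for k using common Fj by (cases "k = i"; cases "k = j") auto
      then show ?thesis using INV_disj[OF inv FM FM'] by blast
    qed
  qed
  have nobad: "slot F \<noteq> bad" if FS: "F \<in> S" for F
  proof
    assume sb: "slot F = bad"
    note P = props[OF FS]
    have FM: "F \<in> M" using P by auto
    have ivj: "is_iv (F j)" using sb unfolding slot_def bad_def by simp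
    have Fi: "F i = Pt n" using P ivj by auto
    obtain a b where ab: "F j = Iv a b" using ivj by (cases "F j") auto
    obtain a' b' where ab': "Q j = Iv a' b'" using Qiv[of j] by (cases "Q j") auto
    have "a < b" "a' < b'" using lohi[OF ivj refl FM] lohi[OF Qiv[of j] refl QM] ab ab' by auto
    moreover have "tj = a \<or> tj = b" "tj = a' \<or> tj = b'" using P ab ab' ivj tjQ by auto
    moreover have "(a = tj) = (a' = tj)" using sb ab ab' ivj unfolding slot_def bad_def by simp
    ultimately have cj: "cset (F j) \<inter> cset (Q j) \<noteq> {}" using iv_share ab ab' by metis
    have "cset (F k) \<inter> cset (Q k) \<noteq> {}" for k
    proof -
      consider "k = i" | "k = j" | "k \<noteq> i" "k \<noteq> j" by blast
      then show ?thesis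
      proof cases
        case 1 then show ?thesis using Fi Qiv[of i] nQ by (cases "Q i") auto
      next
        case 2 then show ?thesis using cj by simp
      next
        case 3
        have "ctr (T k) \<in> cset (F k)" using Tk_in[OF 3] P 3 by blast
        moreover have "ctr (T k) \<in> cset (Q k)" using Tk_in[of k Q, OF 3 TQ[rule_format, of k] Qiv[of k]] .
        ultimately show ?thesis by blast
      qed
    qed
    then have "F = Q" using INV_disj[OF inv FM QM] by blast
    then show False using Fi Qiv[of i] by simp
  qed
  have "card S = card (slot ` S)" using card_image[OF inj] by simp
  also have "\<dots> \<le> card (UNIV - {bad})"
  proof (rule card_mono)
    show "slot ` S \<subseteq> UNIV - {bad}"
    proof
      fix x assume "x \<in> slot ` S"
      then obtain F where "F \<in> S" "x = slot F" by blast
      then show "x \<in> UNIV - {bad}" using nobad by blast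
    qed
  qed simp
  also have "\<dots> = 3" using card_bool2 by (simp add: card_Diff_singleton)
  finally show ?thesis unfolding S_def by simp
qed



lemma path_lemma:
  fixes \<rho> \<tau> :: "real^'d::finite"
  assumes "\<not> P \<rho>" "P \<tau>"
  shows "\<exists>\<rho>1 j. \<not> P \<rho>1 \<and> P (\<chi> l. if l = j then \<tau>$j else \<rho>1$l) \<and> \<rho>1$j \<noteq> \<tau>$j \<and> \<rho>1$j = \<rho>$j
           \<and> (\<forall>l. \<rho>1$l = \<rho>$l \<or> \<rho>1$l = \<tau>$l)"
  using assms(1)
proof (induction "card {k. \<rho>$k \<noteq> \<tau>$k}" arbitrary: \<rho> rule: less_induct)
  case less
  show ?case
  proof (cases "{k. \<rho>$k \<noteq> \<tau>$k} = {}")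
    case True
    then have "\<rho> = \<tau>" by (simp add: vec_eq_iff)
    then show ?thesis using less.prems assms(2) by simp
  next
    case False
    then obtain k where k: "\<rho>$k \<noteq> \<tau>$k" by auto
    define \<rho>' where "\<rho>' = (\<chi> l. if l = k then \<tau>$k else \<rho>$l)"
    show ?thesis
    proof (cases "P \<rho>'")
      case True
      then show ?thesis using less.prems k unfolding \<rho>'_def by (intro exI[of _ \<rho>] exI[of _ k]) auto
    next
      case False
      have sub: "{l. \<rho>'$l \<noteq> \<tau>$l} = {l. \<rho>$l \<noteq> \<tau>$l} - {k}" unfolding \<rho>'_def by auto
      have "card {l. \<rho>'$l \<noteq> \<tau>$l} < card {l. \<rho>$l \<noteq> \<tau>$l}"
        unfolding sub using k by (intro card_Diff1_less) auto
      then have "\<exists>\<rho>1 j. \<not> P \<rho>1 \<and> P (\<chi> l. if l = j then \<tau>$j else \<rho>1$l) \<and> \<rho>1$j \<noteq> \<tau>$j \<and> \<rho>1$j = \<rho>'$j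
           \<and> (\<forall>l. \<rho>1$l = \<rho>'$l \<or> \<rho>1$l = \<tau>$l)"
        by (rule less.hyps[OF _ False])
      then obtain \<rho>1 j where r: "\<not> P \<rho>1" "P (\<chi> l. if l = j then \<tau>$j else \<rho>1$l)" "\<rho>1$j \<noteq> \<tau>$j" "\<rho>1$j = \<rho>'$j"
          "\<forall>l. \<rho>1$l = \<rho>'$l \<or> \<rho>1$l = \<tau>$l"
        by (elim exE conjE)
      have "j \<noteq> k" using r(3,4) unfolding \<rho>'_def by auto
      then have "\<rho>1$j = \<rho>$j" using r(4) unfolding \<rho>'_def by simp
      moreover have "\<forall>l. \<rho>1$l = \<rho>$l \<or> \<rho>1$l = \<tau>$l"
      proof
        fix l show "\<rho>1$l = \<rho>$l \<or> \<rho>1$l = \<tau>$l" using r(5)[rule_format, of l] unfolding \<rho>'_def by (cases "l = k") auto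
      qed
      ultimately show ?thesis using r(1,2,3) by (intro exI[of _ \<rho>1] exI[of _ j]) simp
    qed
  qed
qed

lemma subc_ebox: "(\<forall>k. subc (E k) (F k)) \<Longrightarrow> ebox E \<subseteq> ebox F"
proof
  fix z assume s: "\<forall>k. subc (E k) (F k)" and z: "z \<in> ebox E"
  show "z \<in> ebox F" unfolding mem_ebox
  proof
    fix k
    have "real_of_int (clo (E k)) \<le> z$k \<and> z$k \<le> real_of_int (chi (E k))" using z unfolding mem_ebox by blast
    moreover have "clo (F k) \<le> clo (E k)" "chi (E k) \<le> chi (F k)" using s unfolding subc_def by auto
    ultimately show "real_of_int (clo (F k)) \<le> z$k \<and> z$k \<le> real_of_int (chi (F k))"
      by (smt (verit) of_int_le_iff)
  qed
qed

lemma Omega_box: "Omega N = box 0 (\<chi> k. real (N k))"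
  unfolding Omega_def by (auto simp: mem_box_cart)

lemma Sk_at:
  assumes inv: "INV N p M" and zi: "z$i = real_of_int n"
  shows "z \<in> Sk M i \<longleftrightarrow> (\<exists>Q. (Q \<in> M \<and> is_cell Q \<and> (clo (Q i) = n \<or> chi (Q i) = n)) \<and> z \<in> ebox Q)"
proof -
  have cl: "closure (eset Q) = ebox Q" if "Q \<in> M" for Q
  proof -
    have "\<forall>k. wfc (N k) (Q k)" using INV_wf[OF inv that] by blast
    then show ?thesis by (rule closure_eset)
  qed
  show ?thesis
  proof
    assume "z \<in> Sk M i"
    then obtain Q where Q: "Q \<in> M" "is_cell Q" "z \<in> closure (eset Q)"
        "z$i \<in> {real_of_int (clo (Q i)), real_of_int (chi (Q i))}" unfolding Sk_def by blast
    then show "\<exists>Q. (Q \<in> M \<and> is_cell Q \<and> (clo (Q i) = n \<or> chi (Q i) = n)) \<and> z \<in> ebox Q"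
      using zi cl[OF Q(1)] by (intro exI[of _ Q]) auto
  next
    assume "\<exists>Q. (Q \<in> M \<and> is_cell Q \<and> (clo (Q i) = n \<or> chi (Q i) = n)) \<and> z \<in> ebox Q"
    then obtain Q where Q: "Q \<in> M" "is_cell Q" "clo (Q i) = n \<or> chi (Q i) = n" "z \<in> ebox Q" by blast
    then have "z \<in> closure (eset Q)" "z$i \<in> {real_of_int (clo (Q i)), real_of_int (chi (Q i))}" using cl[OF Q(1)] zi by auto
    then show "z \<in> Sk M i" unfolding Sk_def using Q(1,2) by blast
  qed
qed



lemma local_lemma:
  fixes w \<delta> :: "real^'d::finite"
  assumes inv: "INV N p M" and Npos: "\<forall>k. N k \<ge> 1" and cd: "CARD('d) \<ge> 2"
    and wO: "w \<in> cOmega N" and wi: "w$i = real_of_int n" and wS: "w \<in> Sk M i"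
    and di: "\<delta>$i = 0" and evn: "\<forall>\<^sub>F \<epsilon> in AR0. w + \<epsilon> *\<^sub>R \<delta> \<notin> Sk M i"
    and evO: "\<forall>\<^sub>F \<epsilon> in AR0. w + \<epsilon> *\<^sub>R \<delta> \<in> cOmega N"
  shows "\<exists>T Q j. tjunction N M T \<and> ascell_rel M T Q i j \<and> w \<in> closure (eset T) \<and> \<delta>$j \<noteq> 0
            \<and> (\<forall>\<^sub>F \<epsilon> in AR0. w$j + \<epsilon> * \<delta>$j \<in> cset (Q j))"
proof -
  define touch where "touch Q \<longleftrightarrow> Q \<in> M \<and> is_cell Q \<and> (clo (Q i) = n \<or> chi (Q i) = n)" for Q
  define near where "near v \<longleftrightarrow> (\<exists>Q. touch Q \<and> w \<in> ebox Q \<and> dirOK (elo Q) (ehi Q) w v)" for v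
  have wf: "wfc (N k) (E k)" if "E \<in> M" for E k using INV_wf[OF inv that] .
  have lohi: "elo E k < ehi E k" if "E \<in> M" "is_cell E" for E k
    using wf[OF that(1), of k] that(2) unfolding is_cell_def wfc_def elo_def ehi_def by auto
  have SkA: "z \<in> Sk M i \<longleftrightarrow> (\<exists>Q. touch Q \<and> z \<in> ebox Q)" if "z$i = real_of_int n" for z
    using Sk_at[OF inv that] unfolding touch_def .
  have wB: "inb (\<lambda>k. 0) (\<lambda>k. real (N k)) w" using wO unfolding cOmega_inb .
  have near_ev: "\<forall>\<^sub>F \<eta> in AR0. w + \<eta> *\<^sub>R v \<in> Sk M i" if nv: "near v" and vi: "v$i = 0" for v
  proof -
    obtain Q where Q: "touch Q" "w \<in> ebox Q" "dirOK (elo Q) (ehi Q) w v" using nv unfolding near_def by blast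
    have "\<forall>\<^sub>F \<eta> in AR0. inb (elo Q) (ehi Q) (w + \<eta> *\<^sub>R v)" using K1 Q(2,3) ebox_inb2 by blast
    then show ?thesis
    proof (rule eventually_mono)
      fix \<eta> assume "inb (elo Q) (ehi Q) (w + \<eta> *\<^sub>R v)"
      then have "w + \<eta> *\<^sub>R v \<in> ebox Q" using ebox_inb2 by blast
      moreover have "(w + \<eta> *\<^sub>R v)$i = real_of_int n" using wi vi by simp
      ultimately show "w + \<eta> *\<^sub>R v \<in> Sk M i" using SkA Q(1) by blast
    qed
  qed
  obtain Q2 where Q2: "touch Q2" "w \<in> ebox Q2" using SkA[OF wi] wS by blast
  have Q2M: "Q2 \<in> M" "is_cell Q2" using Q2(1) unfolding touch_def by auto
  define \<tau> :: "real^'d" where "\<tau> = (\<chi> k. if k = i then 0 else if w$k < ehi Q2 k then 1 else -1)"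
  have w2: "elo Q2 k \<le> w$k" "w$k \<le> ehi Q2 k" for k using Q2(2) unfolding ebox_inb2 inb_def by auto
  have dirQ2: "dirOK (elo Q2) (ehi Q2) w \<tau>"
    unfolding dirOK_def
  proof (intro allI conjI impI)
    fix k
    show "0 < \<tau>$k \<Longrightarrow> w$k < ehi Q2 k" unfolding \<tau>_def by (simp split: if_splits)
    assume "\<tau>$k < 0"
    then have "\<not> w$k < ehi Q2 k" unfolding \<tau>_def by (simp split: if_splits)
    then have "w$k = ehi Q2 k" using w2[of k] by simp
    then show "elo Q2 k < w$k" using lohi[OF Q2M, of k] by simp
  qed
  have near_tau: "near \<tau>" unfolding near_def using Q2 dirQ2 by blast
  define \<rho>0 :: "real^'d" where "\<rho>0 = (\<chi> k. if k = i then 0 else if 0 < \<delta>$k then 1 else if \<delta>$k < 0 then -1 else \<tau>$k)"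
  have not_near0: "\<not> near \<rho>0"
  proof
    assume "near \<rho>0"
    then obtain Q where Q: "touch Q" "w \<in> ebox Q" "dirOK (elo Q) (ehi Q) w \<rho>0" unfolding near_def by blast
    have "dirOK (elo Q) (ehi Q) w \<delta>"
      unfolding dirOK_def
    proof (intro allI conjI impI)
      fix k
      have q: "0 < \<rho>0$k \<longrightarrow> w$k < ehi Q k" "\<rho>0$k < 0 \<longrightarrow> elo Q k < w$k" using Q(3) unfolding dirOK_def by auto
      show "0 < \<delta>$k \<Longrightarrow> w$k < ehi Q k" using q di unfolding \<rho>0_def by (cases "k = i") auto
      show "\<delta>$k < 0 \<Longrightarrow> elo Q k < w$k" using q di unfolding \<rho>0_def by (cases "k = i") auto
    qed
    then have "near \<delta>" unfolding near_def using Q(1,2) by blast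
    then have "\<forall>\<^sub>F \<eta> in AR0. w + \<eta> *\<^sub>R \<delta> \<in> Sk M i" using near_ev di by blast
    then have "\<forall>\<^sub>F \<eta> in AR0. False" using evn by (rule eventually_elim2) simp
    then show False by (rule ev_False)
  qed
  obtain \<rho>1 j where pl: "\<not> near \<rho>1" "near (\<chi> l. if l = j then \<tau>$j else \<rho>1$l)" "\<rho>1$j \<noteq> \<tau>$j" "\<rho>1$j = \<rho>0$j"
      "\<forall>l. \<rho>1$l = \<rho>0$l \<or> \<rho>1$l = \<tau>$l"
    using path_lemma[of near \<rho>0 \<tau>, OF not_near0 near_tau] by (elim exE conjE)
  define \<rho>2 :: "real^'d" where "\<rho>2 = (\<chi> l. if l = j then \<tau>$j else \<rho>1$l)"
  define \<sigma> :: "real^'d" where "\<sigma> = (\<chi> l. if l = j then 0 else \<rho>1$l)"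
  have tau_vals: "\<tau>$k = (if k = i then 0 else if w$k < ehi Q2 k then 1 else -1)" for k unfolding \<tau>_def by simp
  have rho0_vals: "\<rho>0$k = (if k = i then 0 else if 0 < \<delta>$k then 1 else if \<delta>$k < 0 then -1 else \<tau>$k)" for k unfolding \<rho>0_def by simp
  have r1i: "\<rho>1$i = 0" using pl(5)[rule_format, of i] tau_vals[of i] rho0_vals[of i] by auto
  have r1k: "\<rho>1$k = 1 \<or> \<rho>1$k = -1" if "k \<noteq> i" for k using pl(5)[rule_format, of k] tau_vals[of k] rho0_vals[of k] that by (auto split: if_splits)
  have ji: "j \<noteq> i" using pl(3) r1i tau_vals[of i] by auto
  have dj: "\<delta>$j \<noteq> 0" using pl(3,4) rho0_vals[of j] ji by (auto split: if_splits)
  have r1j: "\<rho>1$j = (if 0 < \<delta>$j then 1 else -1)" using pl(4) rho0_vals[of j] ji dj by (auto split: if_splits)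
  have tj_val: "\<tau>$j = - \<rho>1$j" using pl(3) tau_vals[of j] r1j ji by (auto split: if_splits)
  have r2: "\<rho>2$k = (if k = j then \<tau>$j else \<rho>1$k)" for k unfolding \<rho>2_def by simp
  have sg: "\<sigma>$k = (if k = j then 0 else \<rho>1$k)" for k unfolding \<sigma>_def by simp
  define dO where "dO v \<longleftrightarrow> dirOK (\<lambda>k. 0) (\<lambda>k. real (N k)) w v" for v
  have dOdelta: "dO \<delta>"
  proof -
    have "\<forall>\<^sub>F \<eta> in AR0. inb (\<lambda>k. 0) (\<lambda>k. real (N k)) (w + \<eta> *\<^sub>R \<delta>)" using evO unfolding cOmega_inb .
    then have "\<exists>\<^sub>F \<eta> in AR0. inb (\<lambda>k. 0) (\<lambda>k. real (N k)) (w + \<eta> *\<^sub>R \<delta>)"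
      by (rule eventually_frequently[OF trivial_limit_at_right_real])
    then show ?thesis unfolding dO_def using K2 by blast
  qed
  have NQ2: "ehi Q2 k \<le> real (N k)" "0 \<le> elo Q2 k" for k
    using wf[OF Q2M(1), of k] unfolding wfc_def elo_def ehi_def by auto
  have dOtau: "dO \<tau>" unfolding dO_def dirOK_def
  proof (intro allI conjI impI)
    fix k
    show "0 < \<tau>$k \<Longrightarrow> w$k < real (N k)" using tau_vals[of k] NQ2[of k] by (auto split: if_splits)
    show "\<tau>$k < 0 \<Longrightarrow> 0 < w$k" using tau_vals[of k] NQ2[of k] w2[of k] lohi[OF Q2M, of k] by (auto split: if_splits)
  qed
  have dOrho0: "dO \<rho>0" unfolding dO_def dirOK_def
  proof (intro allI conjI impI)
    fix k
    have a: "0 < \<delta>$k \<longrightarrow> w$k < real (N k)" "\<delta>$k < 0 \<longrightarrow> 0 < w$k" using dOdelta unfolding dO_def dirOK_def by auto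
    have b: "0 < \<tau>$k \<longrightarrow> w$k < real (N k)" "\<tau>$k < 0 \<longrightarrow> 0 < w$k" using dOtau unfolding dO_def dirOK_def by auto
    show "0 < \<rho>0$k \<Longrightarrow> w$k < real (N k)" using rho0_vals[of k] a b by (auto split: if_splits)
    show "\<rho>0$k < 0 \<Longrightarrow> 0 < w$k" using rho0_vals[of k] a b by (auto split: if_splits)
  qed
  have dOrho1: "dO \<rho>1" unfolding dO_def dirOK_def
  proof (intro allI)
    fix k
    have a: "0 < \<rho>0$k \<longrightarrow> w$k < real (N k)" "\<rho>0$k < 0 \<longrightarrow> 0 < w$k" using dOrho0 unfolding dO_def dirOK_def by auto
    have b: "0 < \<tau>$k \<longrightarrow> w$k < real (N k)" "\<tau>$k < 0 \<longrightarrow> 0 < w$k" using dOtau unfolding dO_def dirOK_def by auto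
    show "(0 < \<rho>1$k \<longrightarrow> w$k < real (N k)) \<and> (\<rho>1$k < 0 \<longrightarrow> 0 < w$k)" using pl(5)[rule_format, of k] a b by auto
  qed
  have dOsigma: "dO \<sigma>" unfolding dO_def dirOK_def
  proof (intro allI)
    fix k
    have a: "0 < \<rho>1$k \<longrightarrow> w$k < real (N k)" "\<rho>1$k < 0 \<longrightarrow> 0 < w$k" using dOrho1 unfolding dO_def dirOK_def by auto
    show "(0 < \<sigma>$k \<longrightarrow> w$k < real (N k)) \<and> (\<sigma>$k < 0 \<longrightarrow> 0 < w$k)" using a unfolding sg by auto
  qed
  obtain Q3 where Q3: "touch Q3" "w \<in> ebox Q3" "dirOK (elo Q3) (ehi Q3) w \<rho>2"
    using pl(2) unfolding near_def \<rho>2_def by blast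
  have Q3M: "Q3 \<in> M" "is_cell Q3" using Q3(1) unfolding touch_def by auto
  have dirQ3s: "dirOK (elo Q3) (ehi Q3) w \<sigma>" unfolding dirOK_def
  proof (intro allI)
    fix k
    have a: "0 < \<rho>2$k \<longrightarrow> w$k < ehi Q3 k" "\<rho>2$k < 0 \<longrightarrow> elo Q3 k < w$k" using Q3(3) unfolding dirOK_def by auto
    show "(0 < \<sigma>$k \<longrightarrow> w$k < ehi Q3 k) \<and> (\<sigma>$k < 0 \<longrightarrow> elo Q3 k < w$k)" using a unfolding sg r2 by auto
  qed
  have evr1: "\<forall>\<^sub>F \<eta> in AR0. w + \<eta> *\<^sub>R \<rho>1 \<in> cOmega N"
    unfolding cOmega_inb using K1[OF wB] dOrho1 unfolding dO_def by blast
  obtain Q where QM: "Q \<in> M" and evQ: "\<forall>\<^sub>F \<eta> in AR0. w + \<eta> *\<^sub>R \<rho>1 \<in> eset Q" using ENT[OF inv evr1] by blast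
  obtain \<eta>1 \<eta>2 where et: "0 < \<eta>1" "\<eta>1 < \<eta>2" "w + \<eta>1 *\<^sub>R \<rho>1 \<in> eset Q" "w + \<eta>2 *\<^sub>R \<rho>1 \<in> eset Q"
    using ev_two[OF evQ] by blast
  have Qk: "is_iv (Q k)" if "k \<noteq> i" for k
  proof -
    have "(w + \<eta>1 *\<^sub>R \<rho>1)$k \<in> cset (Q k)" "(w + \<eta>2 *\<^sub>R \<rho>1)$k \<in> cset (Q k)" using et unfolding mem_eset by auto
    moreover have "(w + \<eta>1 *\<^sub>R \<rho>1)$k \<noteq> (w + \<eta>2 *\<^sub>R \<rho>1)$k" using r1k[OF that] et(1,2) by auto
    ultimately show ?thesis by (cases "Q k") auto
  qed
  have nQi: "real_of_int n \<in> cset (Q i)" using et(3) wi r1i unfolding mem_eset by (metis ray_comp mult_zero_right add_0_right)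
  have Qi: "is_iv (Q i)"
  proof (rule ccontr)
    assume "\<not> is_iv (Q i)"
    then have "Q i = Pt n" using nQi by (cases "Q i") auto
    moreover have "\<forall>k. k \<noteq> i \<longrightarrow> is_iv (Q k)" using Qk by blast
    ultimately have "\<exists>Q'\<in>M. is_cell Q' \<and> (clo (Q' i) = n \<or> chi (Q' i) = n) \<and> (\<forall>k. subc (Q k) (Q' k))"
      using face_touch[OF inv _ QM] Npos by blast
    then obtain Q' where Q': "Q' \<in> M" "is_cell Q'" "clo (Q' i) = n \<or> chi (Q' i) = n" "\<forall>k. subc (Q k) (Q' k)"
      by blast
    have "ebox Q \<subseteq> ebox Q'" using subc_ebox Q'(4) by blast
    then have "\<forall>\<^sub>F \<eta> in AR0. inb (elo Q') (ehi Q') (w + \<eta> *\<^sub>R \<rho>1)"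
      using evQ by (rule_tac eventually_mono) (use eset_sub_ebox ebox_inb2 in blast)+
    then have "\<exists>\<^sub>F \<eta> in AR0. inb (elo Q') (ehi Q') (w + \<eta> *\<^sub>R \<rho>1)"
      by (rule eventually_frequently[OF trivial_limit_at_right_real])
    then have "inb (elo Q') (ehi Q') w \<and> dirOK (elo Q') (ehi Q') w \<rho>1" by (rule K2)
    then have "near \<rho>1" unfolding near_def touch_def using Q' ebox_inb2 by blast
    then show False using pl(1) by simp
  qed
  have Qc: "is_cell Q" unfolding is_cell_def
  proof
    fix k show "is_iv (Q k)" using Qk Qi by (cases "k = i") auto
  qed
  have nQ: "clo (Q i) < n \<and> n < chi (Q i)" using nQi Qi by (cases "Q i") auto
  have QwB: "w \<in> ebox Q \<and> dirOK (elo Q) (ehi Q) w \<rho>1" using ev_eset_K2[OF evQ] .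
  have dirQs: "dirOK (elo Q) (ehi Q) w \<sigma>" unfolding dirOK_def
  proof (intro allI)
    fix k
    have a: "0 < \<rho>1$k \<longrightarrow> w$k < ehi Q k" "\<rho>1$k < 0 \<longrightarrow> elo Q k < w$k" using QwB unfolding dirOK_def by auto
    show "(0 < \<sigma>$k \<longrightarrow> w$k < ehi Q k) \<and> (\<sigma>$k < 0 \<longrightarrow> elo Q k < w$k)" using a unfolding sg by auto
  qed
  have evs: "\<forall>\<^sub>F \<eta> in AR0. w + \<eta> *\<^sub>R \<sigma> \<in> cOmega N"
    unfolding cOmega_inb using K1[OF wB] dOsigma unfolding dO_def by blast
  obtain T where TM: "T \<in> M" and evT: "\<forall>\<^sub>F \<eta> in AR0. w + \<eta> *\<^sub>R \<sigma> \<in> eset T" using ENT[OF inv evs] by blast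
  have QinB: "inb (elo Q) (ehi Q) w" using QwB ebox_inb2 by blast
  have Q3inB: "inb (elo Q3) (ehi Q3) w" using Q3(2) ebox_inb2 by blast
  have evQb: "\<forall>\<^sub>F \<eta> in AR0. w + \<eta> *\<^sub>R \<sigma> \<in> ebox Q"
    using K1[OF QinB dirQs] by (rule eventually_mono) (simp add: ebox_inb2)
  have evQ3b: "\<forall>\<^sub>F \<eta> in AR0. w + \<eta> *\<^sub>R \<sigma> \<in> ebox Q3"
    using K1[OF Q3inB dirQ3s] by (rule eventually_mono) (simp add: ebox_inb2)
  have "\<forall>\<^sub>F \<eta> in AR0. w + \<eta> *\<^sub>R \<sigma> \<in> eset T \<and> w + \<eta> *\<^sub>R \<sigma> \<in> ebox Q \<and> w + \<eta> *\<^sub>R \<sigma> \<in> ebox Q3"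
    using eventually_conj[OF evT eventually_conj[OF evQb evQ3b]] .
  then obtain \<eta>0 where e0: "0 < \<eta>0" "w + \<eta>0 *\<^sub>R \<sigma> \<in> eset T" "w + \<eta>0 *\<^sub>R \<sigma> \<in> ebox Q" "w + \<eta>0 *\<^sub>R \<sigma> \<in> ebox Q3"
    using ev_ex by blast
  define y where "y = w + \<eta>0 *\<^sub>R \<sigma>"
  have yT: "y \<in> eset T" and yQ: "y \<in> ebox Q" and yQ3: "y \<in> ebox Q3" using e0 unfolding y_def by auto
  have subTQ: "\<forall>k. subc (T k) (Q k)"
  proof
    fix k show "subc (T k) (Q k)" by (rule INV_fp[OF inv TM QM]) (rule meets_point[OF yT yQ])
  qed
  have subTQ3: "\<forall>k. subc (T k) (Q3 k)"
  proof
    fix k show "subc (T k) (Q3 k)" by (rule INV_fp[OF inv TM Q3M(1)]) (rule meets_point[OF yT yQ3])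
  qed
  have yi: "y$i = real_of_int n" unfolding y_def using wi sg[of i] ji r1i by simp
  have yj: "y$j = w$j" unfolding y_def using sg[of j] by simp
  have t3: "clo (Q3 i) = n \<or> chi (Q3 i) = n" using Q3(1) unfolding touch_def by simp
  have Ti: "T i = Pt n"
  proof (cases "T i")
    case (Pt m) then show ?thesis using yT yi unfolding mem_eset by (metis cset.simps(1) of_int_eq_iff singletonD)
  next
    case (Iv c d)
    then have "real_of_int c < real_of_int n" "real_of_int n < real_of_int d" using yT yi unfolding mem_eset by (metis cset.simps(2) greaterThanLessThan_iff)+
    then have "c < n" "n < d" by simp_all
    moreover have "clo (Q3 i) \<le> c" "d \<le> chi (Q3 i)" using subTQ3 Iv unfolding subc_def by (metis clo.simps(2) chi.simps(2))+
    ultimately show ?thesis using t3 by auto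
  qed
  have wjQ: "w$j = elo Q j \<or> w$j = ehi Q j"
  proof (rule ccontr)
    assume nt: "\<not> ?thesis"
    have wb: "elo Q k \<le> w$k" "w$k \<le> ehi Q k" for k using QinB unfolding inb_def by auto
    have strict: "\<forall>k. \<sigma>$k = 0 \<longrightarrow> elo Q k < w$k \<and> w$k < ehi Q k"
    proof (intro allI impI)
      fix k assume s0: "\<sigma>$k = 0"
      show "elo Q k < w$k \<and> w$k < ehi Q k"
      proof (cases "k = j")
        case True then show ?thesis using nt wb[of j] by auto
      next
        case False
        then have "k = i" using s0 sg[of k] r1k[of k] by (cases "k = i") auto
        then show ?thesis using nQ wi unfolding elo_def ehi_def by simp
      qed
    qed
    have "\<forall>\<^sub>F \<eta> in AR0. \<forall>k. elo Q k < (w + \<eta> *\<^sub>R \<sigma>)$k \<and> (w + \<eta> *\<^sub>R \<sigma>)$k < ehi Q k"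
      using K3[OF QinB dirQs strict] .
    then have "\<forall>\<^sub>F \<eta> in AR0. w + \<eta> *\<^sub>R \<sigma> \<in> eset Q"
    proof (rule eventually_mono)
      fix \<eta> assume h: "\<forall>k. elo Q k < (w + \<eta> *\<^sub>R \<sigma>)$k \<and> (w + \<eta> *\<^sub>R \<sigma>)$k < ehi Q k"
      show "w + \<eta> *\<^sub>R \<sigma> \<in> eset Q" unfolding mem_eset
      proof
        fix k show "(w + \<eta> *\<^sub>R \<sigma>)$k \<in> cset (Q k)" using h[rule_format, of k] Qc
          unfolding is_cell_def elo_def ehi_def by (simp add: cset_iff)
      qed
    qed
    then have "\<forall>\<^sub>F \<eta> in AR0. w + \<eta> *\<^sub>R \<sigma> \<in> eset Q \<and> w + \<eta> *\<^sub>R \<sigma> \<in> ebox Q3"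
      using evQ3b by (rule eventually_conj)
    then obtain \<eta>' where "0 < \<eta>'" "w + \<eta>' *\<^sub>R \<sigma> \<in> eset Q" "w + \<eta>' *\<^sub>R \<sigma> \<in> ebox Q3" using ev_ex by blast
    then have "subc (Q i) (Q3 i)" using INV_fp[OF inv QM Q3M(1)] meets_point by blast
    then show False using nQ t3 unfolding subc_def by auto
  qed
  define tj where "tj = (if 0 < \<delta>$j then clo (Q j) else chi (Q j))"
  have wtj: "w$j = real_of_int tj"
  proof (cases "0 < \<delta>$j")
    case True
    then have "0 < \<rho>1$j" using r1j by simp
    then have "w$j < ehi Q j" using QwB unfolding dirOK_def by auto
    then show ?thesis using wjQ True unfolding tj_def elo_def by auto
  next
    case False
    then have "\<rho>1$j < 0" using r1j by simp
    then have "elo Q j < w$j" using QwB unfolding dirOK_def by auto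
    then show ?thesis using wjQ False unfolding tj_def ehi_def by auto
  qed
  have Qjiv: "is_iv (Q j)" using Qc unfolding is_cell_def by simp
  have Tj: "T j = Pt tj"
  proof (cases "T j")
    case (Pt m) then show ?thesis using yT yj wtj unfolding mem_eset by (metis cset.simps(1) of_int_eq_iff singletonD)
  next
    case (Iv c d)
    then have "real_of_int c < real_of_int tj" "real_of_int tj < real_of_int d" using yT yj wtj unfolding mem_eset by (metis cset.simps(2) greaterThanLessThan_iff)+
    then have "c < tj" "tj < d" by simp_all
    moreover have "clo (Q j) \<le> c" "d \<le> chi (Q j)" using subTQ Iv unfolding subc_def by (metis clo.simps(2) chi.simps(2))+
    ultimately show ?thesis unfolding tj_def by (auto split: if_splits)
  qed
  have Toth: "\<forall>k. k \<noteq> i \<longrightarrow> k \<noteq> j \<longrightarrow> is_iv (T k)"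
  proof (intro allI impI)
    fix k assume k: "k \<noteq> i" "k \<noteq> j"
    obtain a1 a2 where aa: "0 < a1" "a1 < a2" "w + a1 *\<^sub>R \<sigma> \<in> eset T" "w + a2 *\<^sub>R \<sigma> \<in> eset T" using ev_two[OF evT] by blast
    have "(w + a1 *\<^sub>R \<sigma>)$k \<in> cset (T k)" "(w + a2 *\<^sub>R \<sigma>)$k \<in> cset (T k)" using aa unfolding mem_eset by auto
    moreover have "(w + a1 *\<^sub>R \<sigma>)$k \<noteq> (w + a2 *\<^sub>R \<sigma>)$k" using r1k[OF k(1)] sg[of k] k(2) aa(1,2) by auto
    ultimately show "is_iv (T k)" by (cases "T k") auto
  qed
  have ij: "i \<noteq> j" using ji by simp
  have tjQ: "tj = clo (Q j) \<or> tj = chi (Q j)" unfolding tj_def by simp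
  have card4: "card {F \<in> M. edim F = CARD('d) - 1 \<and> eset T \<subseteq> frontier (eset F)} < 4"
    using tj_card[OF inv TM ij Ti Tj Toth QM Qc subTQ nQ tjQ cd] .
  have ivset: "{k. is_iv (T k)} = UNIV - {i, j}" using Ti Tj Toth by auto
  have edT: "edim T = CARD('d) - 2"
    unfolding edim_def ivset using ij by (simp add: card_Diff_subset)
  have wfT: "wfc (N k) (T k)" for k using wf[OF TM] .
  have wfQ: "wfc (N k) (Q k)" for k using wf[OF QM] .
  have wfQ3: "wfc (N k) (Q3 k)" for k using wf[OF Q3M(1)] .
  have yOm0: "\<forall>k. 0 < y$k \<and> y$k < real (N k)"
  proof (intro allI)
    fix k
    show "0 < y$k \<and> y$k < real (N k)"
    proof -
      consider "k = i" | "k = j" | "k \<noteq> i" "k \<noteq> j" by blast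
      then show ?thesis
      proof cases
        case 1
        have "0 \<le> clo (Q i)" "chi (Q i) \<le> int (N i)" using wfQ[of i] unfolding wfc_def by auto
        then have "0 < n" "n < int (N i)" using nQ by auto
        then show ?thesis using 1 yi by simp
      next
        case 2
        have q: "0 \<le> clo (Q j)" "clo (Q j) < chi (Q j)" "chi (Q j) \<le> int (N j)" using wfQ[of j] Qjiv unfolding wfc_def by auto
        have q3: "0 \<le> clo (Q3 j)" "chi (Q3 j) \<le> int (N j)" using wfQ3[of j] unfolding wfc_def by auto
        have d3: "0 < \<rho>2$j \<longrightarrow> w$j < ehi Q3 j" "\<rho>2$j < 0 \<longrightarrow> elo Q3 j < w$j" using Q3(3) unfolding dirOK_def by auto
        have r2j: "\<rho>2$j = - \<rho>1$j" using r2[of j] tj_val by simp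
        show ?thesis
        proof (cases "0 < \<delta>$j")
          case True
          then have "tj = clo (Q j)" unfolding tj_def by simp
          moreover have "elo Q3 j < w$j" using d3 r2j r1j True by simp
          ultimately have "0 < tj" "tj < int (N j)" using q q3 wtj unfolding elo_def by auto
          then show ?thesis using 2 yj wtj by simp
        next
          case False
          then have "tj = chi (Q j)" unfolding tj_def by simp
          moreover have "w$j < ehi Q3 j" using d3 r2j r1j False by simp
          ultimately have "0 < tj" "tj < int (N j)" using q q3 wtj unfolding ehi_def by auto
          then show ?thesis using 2 yj wtj by simp
        qed
      next
        case 3
        then have iv: "is_iv (T k)" using Toth by simp
        have "y$k \<in> cset (T k)" using yT unfolding mem_eset by simp
        then have "real_of_int (clo (T k)) < y$k" "y$k < real_of_int (chi (T k))" using cset_iv_strict[OF iv] by auto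
        moreover have "0 \<le> clo (T k)" "chi (T k) \<le> int (N k)" using wfT[of k] unfolding wfc_def by auto
        ultimately show ?thesis by (smt (verit) of_int_0_le_iff of_int_le_iff of_int_of_nat_eq)
      qed
    qed
  qed
  have yOm: "y \<in> Omega N" unfolding Omega_def using yOm0 by simp
  have "y \<notin> frontier (Omega N)"
  proof -
    have "open (Omega N)" unfolding Omega_box by (rule open_box)
    then have "interior (Omega N) = Omega N" by (rule interior_open)
    then show ?thesis using yOm unfolding frontier_def by simp
  qed
  then have nfr: "\<not> eset T \<subseteq> frontier (Omega N)" using yT by blast
  have tjT: "tjunction N M T" unfolding tjunction_def using TM edT nfr card4 by simp
  have clT: "closure (eset T) = ebox T" using closure_eset[of N T] wfT by simp
  have clQ: "closure (eset Q) = ebox Q" using closure_eset[of N Q] wfQ by simp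
  have "open (eset Q)" unfolding open_eset_cell[OF Qc] by (rule open_box)
  then have intQ: "interior (eset Q) = eset Q" by (rule interior_open)
  have frT: "eset T \<subseteq> frontier (eset Q)"
  proof
    fix z assume z: "z \<in> eset T"
    have "z \<in> ebox Q" using z eset_sub_ebox subc_ebox[OF subTQ] by blast
    moreover have "z \<notin> eset Q"
    proof
      assume "z \<in> eset Q"
      then have "z$j \<in> cset (Q j)" unfolding mem_eset by simp
      moreover have "z$j = real_of_int tj" using z Tj unfolding mem_eset by (metis cset.simps(1) singletonD)
      ultimately show False using tjQ cset_iv_strict[OF Qjiv] by auto
    qed
    ultimately show "z \<in> frontier (eset Q)" unfolding frontier_def clQ intQ by simp
  qed
  have asc: "ascell_rel M T Q i j" unfolding ascell_rel_def
    using ij QM Qc frT Ti Tj nQi tjQ by auto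
  have wT: "w \<in> closure (eset T)" using ev_eset_K2[OF evT] clT by simp
  have evj: "\<forall>\<^sub>F \<epsilon> in AR0. w$j + \<epsilon> * \<delta>$j \<in> cset (Q j)"
  proof (cases "0 < \<delta>$j")
    case True
    have lt: "w$j < real_of_int (chi (Q j))" using QwB r1j True unfolding dirOK_def ehi_def by auto
    have "\<forall>\<^sub>F \<epsilon> in AR0. 0 < \<epsilon> \<and> w$j + \<epsilon> * \<delta>$j < real_of_int (chi (Q j))"
      using eventually_conj[OF ev_pos ev_lt[OF lt]] .
    then show ?thesis
    proof (rule eventually_mono)
      fix \<epsilon> :: real assume h: "0 < \<epsilon> \<and> w$j + \<epsilon> * \<delta>$j < real_of_int (chi (Q j))"
      then have "0 < \<epsilon> * \<delta>$j" using True by simp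
      moreover have "w$j = real_of_int (clo (Q j))" using wtj True unfolding tj_def by simp
      ultimately show "w$j + \<epsilon> * \<delta>$j \<in> cset (Q j)" using h Qjiv by (simp add: cset_iff)
    qed
  next
    case False
    then have neg: "\<delta>$j < 0" using dj by simp
    have gt: "real_of_int (clo (Q j)) < w$j" using QwB r1j False unfolding dirOK_def elo_def by auto
    have "\<forall>\<^sub>F \<epsilon> in AR0. 0 < \<epsilon> \<and> real_of_int (clo (Q j)) < w$j + \<epsilon> * \<delta>$j"
      using eventually_conj[OF ev_pos ev_gt[OF gt]] .
    then show ?thesis
    proof (rule eventually_mono)
      fix \<epsilon> :: real assume h: "0 < \<epsilon> \<and> real_of_int (clo (Q j)) < w$j + \<epsilon> * \<delta>$j"
      then have "\<epsilon> * \<delta>$j < 0" using neg by (simp add: mult_pos_neg)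
      moreover have "w$j = real_of_int (chi (Q j))" using wtj False unfolding tj_def by simp
      ultimately show "w$j + \<epsilon> * \<delta>$j \<in> cset (Q j)" using h Qjiv by (simp add: cset_iff)
    qed
  qed
  show ?thesis using tjT asc wT dj evj by blast
qed



lemma Sk_closed:
  assumes fin: "finite M"
  shows "closed (Sk M i)"
proof -
  have "Sk M i = (\<Union>Q\<in>{Q \<in> M. is_cell Q}. closure (eset Q) \<inter> ((\<lambda>z. z$i) -` {real_of_int (clo (Q i)), real_of_int (chi (Q i))}))"
    unfolding Sk_def by auto
  moreover have "closed (closure (eset Q) \<inter> ((\<lambda>z. z$i) -` {real_of_int (clo (Q i)), real_of_int (chi (Q i))}))" for Q :: "'a ent"
    by (intro closed_Int closed_closure closed_vimage_vec_nth finite_imp_closed) simp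
  moreover have "finite {Q \<in> M. is_cell Q}" using fin by simp
  ultimately show ?thesis by (metis (no_types, lifting) closed_UN)
qed

lemma wfc_eset_cOmega: "(\<forall>k. wfc (N k) (E k)) \<Longrightarrow> eset E \<subseteq> cOmega N"
proof
  fix z assume w: "\<forall>k. wfc (N k) (E k)" and z: "z \<in> eset E"
  show "z \<in> cOmega N" unfolding cOmega_def
  proof (simp only: mem_Collect_eq, intro allI)
    fix k
    have "z$k \<in> cset (E k)" using z unfolding mem_eset by simp
    then have "real_of_int (clo (E k)) \<le> z$k \<and> z$k \<le> real_of_int (chi (E k))" by (rule cset_bounds)
    moreover have "0 \<le> clo (E k)" "chi (E k) \<le> int (N k)" using w unfolding wfc_def by auto
    ultimately show "0 \<le> z$k \<and> z$k \<le> real (N k)" by (smt (verit) of_int_0_le_iff of_int_le_iff of_int_of_nat_eq)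
  qed
qed

lemma anchor_wfc:
  assumes inv: "INV N p M" and A: "A \<in> anchors N p M" and n: "0 \<le> n" "n \<le> int (N i)"
  shows "\<forall>k. wfc (N k) ((A(i := Pt n)) k)"
proof
  fix k
  obtain Q where Q: "Q \<in> M" "is_cell Q" "\<forall>l. if odd (p l) then (\<exists>m\<in>{clo (Q l), chi (Q l)}. A l = Pt m) else A l = Q l"
    using A unfolding anchors_def by blast
  have wq: "wfc (N k) (Q k)" using INV_wf[OF inv Q(1)] .
  show "wfc (N k) ((A(i := Pt n)) k)"
  proof (cases "k = i")
    case True then show ?thesis using n unfolding wfc_def by simp
  next
    case False
    have "clo (Q k) \<le> chi (Q k)" using wq unfolding wfc_def by (cases "Q k") auto
    then show ?thesis using Q(3)[rule_format, of k] wq False unfolding wfc_def by (auto split: if_splits)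
  qed
qed

lemma finish:
  fixes u v x :: "real^'d::finite"
  assumes inv: "INV N p M" and Npos: "\<forall>k. N k \<ge> 1" and cd: "CARD('d) \<ge> 2"
    and uO: "u \<in> cOmega N" and vO: "v \<in> cOmega N" and ui: "u$i = real_of_int n" and vi: "v$i = real_of_int n"
    and uS: "u \<notin> Sk M i" and vS: "v \<in> Sk M i"
    and PA: "(u = x \<and> v \<in> eset (A(i := Pt n))) \<or> (v = x \<and> u \<in> eset (A(i := Pt n)))"
  shows "\<exists>T Q j. tjunction N M T \<and> ascell_rel M T Q i j
              \<and> closure (eset T) \<inter> convex hull (eset (A(i := Pt n)) \<union> {x}) \<noteq> {}
              \<and> cset (Q j) \<inter> convex hull (cset (A j) \<union> {x$j}) \<noteq> {}
              \<and> (\<exists>y\<in>cset (A j). y \<noteq> x$j)"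
proof -
  define f where "f t = u + t *\<^sub>R (v - u)" for t :: real
  define St where "St = {t \<in> {0..1}. f t \<in> Sk M i}"
  have fin: "finite M" using inv unfolding INV_def by simp
  have cf: "continuous (at t) f" for t unfolding f_def by (intro continuous_intros)
  have "St = {0..1} \<inter> f -` Sk M i" unfolding St_def by auto
  then have clSt: "closed St" using continuous_closed_vimage[OF Sk_closed[OF fin] cf] by (simp add: closed_Int)
  have "1 \<in> St" unfolding St_def f_def using vS by simp
  then have neSt: "St \<noteq> {}" by blast
  have bdd: "bdd_below St" unfolding St_def by (rule bdd_belowI[of _ 0]) auto
  define ts where "ts = Inf St"
  have tsS: "ts \<in> St" unfolding ts_def using closed_contains_Inf[OF neSt bdd clSt] .
  have ts01: "0 \<le> ts" "ts \<le> 1" and fts: "f ts \<in> Sk M i" using tsS unfolding St_def by auto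
  have "ts \<noteq> 0" using fts uS unfolding f_def by auto
  then have tspos: "0 < ts" using ts01 by simp
  have below: "f t \<notin> Sk M i" if "0 \<le> t" "t < ts" for t
  proof
    assume "f t \<in> Sk M i"
    then have "t \<in> St" using that ts01 unfolding St_def by auto
    then have "ts \<le> t" unfolding ts_def using bdd by (rule cInf_lower)
    then show False using that by simp
  qed
  define w where "w = f ts"
  define \<delta> where "\<delta> = u - v"
  have shift: "w + \<epsilon> *\<^sub>R \<delta> = f (ts - \<epsilon>)" for \<epsilon> unfolding w_def \<delta>_def f_def by (simp add: algebra_simps)
  have seg: "f t \<in> closed_segment u v" if "0 \<le> t" "t \<le> 1" for t
    unfolding closed_segment_def f_def using that by (intro CollectI exI[of _ t]) (simp add: algebra_simps)
  have cO: "cOmega N = cbox 0 (\<chi> k. real (N k))" unfolding cOmega_def by (auto simp: mem_box_cart)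
  have segO: "closed_segment u v \<subseteq> cOmega N"
    unfolding cO by (rule closed_segment_subset[OF uO[unfolded cO] vO[unfolded cO] convex_box(1)])
  have evs: "\<forall>\<^sub>F \<epsilon> in AR0. 0 < \<epsilon> \<and> \<epsilon> < ts"
    using eventually_conj[OF ev_pos ev_lt[OF tspos, of 1]] by simp
  have evn: "\<forall>\<^sub>F \<epsilon> in AR0. w + \<epsilon> *\<^sub>R \<delta> \<notin> Sk M i"
    using evs by (rule eventually_mono) (use below shift in auto)
  have evseg: "\<forall>\<^sub>F \<epsilon> in AR0. w + \<epsilon> *\<^sub>R \<delta> \<in> closed_segment u v"
    using evs by (rule eventually_mono) (use seg shift ts01 in auto)
  have evO: "\<forall>\<^sub>F \<epsilon> in AR0. w + \<epsilon> *\<^sub>R \<delta> \<in> cOmega N"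
    using evseg by (rule eventually_mono) (use segO in auto)
  have wseg: "w \<in> closed_segment u v" unfolding w_def using seg ts01 by simp
  have wO: "w \<in> cOmega N" using wseg segO by auto
  have wi: "w$i = real_of_int n" unfolding w_def f_def using ui vi by simp
  have di: "\<delta>$i = 0" unfolding \<delta>_def using ui vi by simp
  have wS: "w \<in> Sk M i" using fts unfolding w_def .
  obtain T Q j where L: "tjunction N M T" "ascell_rel M T Q i j" "w \<in> closure (eset T)" "\<delta>$j \<noteq> 0"
      "\<forall>\<^sub>F \<epsilon> in AR0. w$j + \<epsilon> * \<delta>$j \<in> cset (Q j)"
    using local_lemma[OF inv Npos cd wO wi wS di evn evO] by blast
  have ij: "i \<noteq> j" using L(2) unfolding ascell_rel_def by simp
  define X where "X = eset (A(i := Pt n)) \<union> {x}"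
  have uvX: "u \<in> X" "v \<in> X" using PA unfolding X_def by auto
  have segX: "closed_segment u v \<subseteq> convex hull X"
    unfolding segment_convex_hull using uvX by (intro hull_mono) auto
  have c1: "closure (eset T) \<inter> convex hull X \<noteq> {}" using L(3) wseg segX by blast
  have projX: "(\<lambda>z. z$j) ` X \<subseteq> cset (A j) \<union> {x$j}"
  proof
    fix y assume "y \<in> (\<lambda>z. z$j) ` X"
    then obtain z where z: "z \<in> X" "y = z$j" by blast
    show "y \<in> cset (A j) \<union> {x$j}"
    proof (cases "z = x")
      case True then show ?thesis using z by simp
    next
      case False
      then have "z \<in> eset (A(i := Pt n))" using z unfolding X_def by simp
      then have "z$j \<in> cset ((A(i := Pt n)) j)" unfolding mem_eset by simp
      then show ?thesis using ij z by simp
    qed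
  qed
  have lin: "linear (\<lambda>z::real^'d. z$j)" by (rule bounded_linear.linear[OF bounded_linear_vec_nth])
  have "\<forall>\<^sub>F \<epsilon> in AR0. w + \<epsilon> *\<^sub>R \<delta> \<in> closed_segment u v \<and> w$j + \<epsilon> * \<delta>$j \<in> cset (Q j)"
    using eventually_conj[OF evseg L(5)] .
  then obtain \<epsilon> where e: "0 < \<epsilon>" "w + \<epsilon> *\<^sub>R \<delta> \<in> closed_segment u v" "w$j + \<epsilon> * \<delta>$j \<in> cset (Q j)"
    using ev_ex by blast
  have "(w + \<epsilon> *\<^sub>R \<delta>)$j \<in> (\<lambda>z. z$j) ` (convex hull X)" using e(2) segX by blast
  also have "\<dots> = convex hull ((\<lambda>z. z$j) ` X)" by (rule convex_hull_linear_image[OF lin])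
  also have "\<dots> \<subseteq> convex hull (cset (A j) \<union> {x$j})" by (rule hull_mono[OF projX])
  finally have "w$j + \<epsilon> * \<delta>$j \<in> convex hull (cset (A j) \<union> {x$j})" by simp
  then have c2: "cset (Q j) \<inter> convex hull (cset (A j) \<union> {x$j}) \<noteq> {}" using e(3) by blast
  have uvj: "u$j \<noteq> v$j" using L(4) unfolding \<delta>_def by simp
  have c3: "\<exists>y\<in>cset (A j). y \<noteq> x$j"
    using PA
  proof
    assume h: "u = x \<and> v \<in> eset (A(i := Pt n))"
    then have "v$j \<in> cset (A j)" using ij unfolding mem_eset by (metis fun_upd_other)
    then show ?thesis using h uvj by (intro bexI[of _ "v$j"]) auto
  next
    assume h: "v = x \<and> u \<in> eset (A(i := Pt n))"
    then have "u$j \<in> cset (A j)" using ij unfolding mem_eset by (metis fun_upd_other)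
    then show ?thesis using h uvj by (intro bexI[of _ "u$j"]) auto
  qed
  show ?thesis using L(1,2) c1 c2 c3 unfolding X_def by blast
qed

theorem proposition4p2:
  fixes N p :: "'d::finite \<Rightarrow> nat" and M :: "'d ent set"
    and i :: 'd and n :: int and x :: "real^'d"
  assumes "CARD('d) \<ge> 2"
    and "\<forall>k. N k \<ge> 1"
    and "\<forall>k. p k \<ge> 1"
    and "mesh_gen N p M"
    and "0 \<le> n" and "n \<le> int (N i)"
    and "x \<in> ATJ N p M i n"
  shows "\<exists>A\<in>anchors N p M. x \<in> suppB p M A \<and>
           (\<exists>T Q j. tjunction N M T \<and> ascell_rel M T Q i j
              \<and> closure (eset T) \<inter> convex hull (eset (A(i := Pt n)) \<union> {x}) \<noteq> {}
              \<and> cset (Q j) \<inter> convex hull (cset (A j) \<union> {x$j}) \<noteq> {}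
              \<and> (\<exists>y\<in>cset (A j). y \<noteq> x$j))"
proof -
  have inv: "INV N p M" using mesh_INV[OF assms(4)] .
  have xS: "x \<in> cOmega N" "x$i = real_of_int n" using assms(7) unfolding ATJ_def Sj_def by auto
  obtain A1 where A1: "A1 \<in> anchors N p M" "n \<in> gknots M i A1" "x \<in> suppB p M A1"
    using assms(7) unfolding ATJ_def by blast
  obtain A2 where A2: "A2 \<in> anchors N p M" "n \<notin> gknots M i A2" "x \<in> suppB p M A2"
    using assms(7) unfolding ATJ_def by blast
  have PO: "eset (A(i := Pt n)) \<subseteq> cOmega N" if "A \<in> anchors N p M" for A
    using wfc_eset_cOmega[OF anchor_wfc[OF inv that assms(5,6)]] .
  have Pne: "ectr (A(i := Pt n)) \<in> eset (A(i := Pt n))" if "A \<in> anchors N p M" for A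
    using ectr_in[OF anchor_wfc[OF inv that assms(5,6)]] .
  have Pi: "z$i = real_of_int n" if "z \<in> eset (A(i := Pt n))" for z A
    using that unfolding mem_eset by (metis cset.simps(1) fun_upd_same singletonD)
  show ?thesis
  proof (cases "x \<in> Sk M i")
    case True
    have "\<not> eset (A2(i := Pt n)) \<subseteq> Sk M i" using A2(2) unfolding gknots_def by simp
    then obtain u where u: "u \<in> eset (A2(i := Pt n))" "u \<notin> Sk M i" by blast
    have "\<exists>T Q j. tjunction N M T \<and> ascell_rel M T Q i j
              \<and> closure (eset T) \<inter> convex hull (eset (A2(i := Pt n)) \<union> {x}) \<noteq> {}
              \<and> cset (Q j) \<inter> convex hull (cset (A2 j) \<union> {x$j}) \<noteq> {}
              \<and> (\<exists>y\<in>cset (A2 j). y \<noteq> x$j)"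
      by (rule finish[OF inv assms(2) assms(1) _ xS(1) Pi[OF u(1)] xS(2) u(2) True])
        (use u PO[OF A2(1)] in auto)
    then show ?thesis using A2(1,3) by blast
  next
    case False
    define v where "v = ectr (A1(i := Pt n))"
    have v: "v \<in> eset (A1(i := Pt n))" unfolding v_def using Pne[OF A1(1)] .
    have "eset (A1(i := Pt n)) \<subseteq> Sk M i" using A1(2) unfolding gknots_def by simp
    then have vS: "v \<in> Sk M i" using v by blast
    have "\<exists>T Q j. tjunction N M T \<and> ascell_rel M T Q i j
              \<and> closure (eset T) \<inter> convex hull (eset (A1(i := Pt n)) \<union> {x}) \<noteq> {}
              \<and> cset (Q j) \<inter> convex hull (cset (A1 j) \<union> {x$j}) \<noteq> {}
              \<and> (\<exists>y\<in>cset (A1 j). y \<noteq> x$j)"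
      by (rule finish[OF inv assms(2) assms(1) xS(1) _ xS(2) Pi[OF v] False vS])
        (use v PO[OF A1(1)] in auto)
    then show ?thesis using A1(1,3) by blast
  qed
qed


end
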